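(* Let $f:\mathbb{R}^n\to\mathbb{R}$ be differentiable with $L_f$-Lipschitz continuous gradient, let $g:\mathbb{R}^n\to\mathbb{R}\cup\{+\infty\}$ be proper, lower semicontinuous and $\gamma_g$-prox-bounded, assume $\operatorname{argmin}\varphi\neq\emptyset$ where $\varphi=f+g$, and let $x^\star$ be a critical point. Suppose $\nabla^2 f$ exists and is continuous around $x^\star$, and that $g$ is prox-regular at $x^\star$ for $-\nabla f(x^\star)$ and twice epi-differentiable at $x^\star$ for $-\nabla f(x^\star)$ with generalized quadratic second-order epi-derivative. Then for $\gamma>0$ sufficiently small, $$\big(\forall s\in\mathbb{R}^n:\ \mathrm d^2\varphi(x^\star,0)(s)\ge0\big)\iff\big(\forall s\in\mathbb{R}^n:\ \langle\nabla^2\varphi_\gamma(x^\star)s,s\rangle\ge0\big).$$ Consequently, $x^\star$ is a second-order stationary point of $\varphi$ if and only if it is a second-order stationary point of $\varphi_\gamma$.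
   Context: $\gamma_g$-prox-bounded: $g+\frac1{2\gamma}\|\cdot\|^2$ bounded below for each $\gamma\in(0,\gamma_g)$. $\operatorname{prox}_{\gamma g}(x)=\operatorname{argmin}_z\{g(z)+\frac1{2\gamma}\|z-x\|^2\}$; $x^\star$ is critical if $x^\star\in\operatorname{prox}_{\gamma g}(x^\star-\gamma\nabla f(x^\star))$ for some $\gamma\in(0,\gamma_g)$. Forward-backward envelope: $\varphi_\gamma(x)=\inf_u\{f(x)+\langle\nabla f(x),u-x\rangle+g(u)+\frac1{2\gamma}\|u-x\|^2\}$; under the hypotheses, $\varphi_\gamma$ is twice differentiable at $x^\star$ for small $\gamma$, and $\nabla^2\varphi_\gamma(x^\star)$ is its Hessian. Prox-regularity of $g$ at $\bar x$ for $\bar v\in\partial g(\bar x)$: there exist $r\ge0,\epsilon>0$ with $g(x')\ge g(x)+\langle v,x'-x\rangle-\frac r2\|x'-x\|^2$ for all $x'\in\mathcal B(\bar x;\epsilon)$ and all $(x,v)\in\operatorname{gph}\partial g$ with $\|x-\bar x\|<\epsilon$, $\|v-\bar v\|<\epsilon$, $g(x)\le g(\bar x)+\epsilon$. Twice epi-differentiability is in the sense of Rockafellar–Wets (Def. 13.6); the second-order epi-derivative is generalized quadratic if it has the form $s\mapsto\langle s,Ms\rangle+\delta_S(s)$ for a subspace $S$ and matrix $M$. $\mathrm d^2\varphi(\bar x,v)(w)$ is the second subderivative (Rockafellar–Wets Def. 13.3). A point $x^\star\in\operatorname{dom}\psi$ is a second-order stationary point of $\psi$ if $0\in\partial\psi(x^\star)$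 and $\mathrm d^2\psi(x^\star,0)(d)\ge0$ for all $d$ (for $C^2$ $\psi$: $\nabla\psi(x^\star)=0$, $\nabla^2\psi(x^\star)\succeq0$). *)

theory Defs
  imports "HOL-Analysis.Analysis"
begin

definition proper_fun :: "('a \<Rightarrow> ereal) \<Rightarrow> bool" where
  "proper_fun g \<longleftrightarrow> (\<forall>x. g x \<noteq> -\<infinity>) \<and> (\<exists>x. g x < \<infinity>)"

definition lsc_fun :: "('a::topological_space \<Rightarrow> ereal) \<Rightarrow> bool" where
  "lsc_fun g \<longleftrightarrow> (\<forall>x. g x \<le> Liminf (at x) g)"

definition prox_bounded :: "('a::real_normed_vector \<Rightarrow> ereal) \<Rightarrow> ereal \<Rightarrow> bool" where
  "prox_bounded g \<gamma>g \<longleftrightarrow>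
     (\<forall>\<gamma>::real. 0 < \<gamma> \<and> ereal \<gamma> < \<gamma>g \<longrightarrow>
        (\<exists>c::real. \<forall>x. ereal c \<le> g x + ereal (norm x ^ 2 / (2 * \<gamma>))))"

definition prox :: "real \<Rightarrow> ('a::real_normed_vector \<Rightarrow> ereal) \<Rightarrow> 'a \<Rightarrow> 'a set" where
  "prox \<gamma> g x = {z. \<forall>w. g z + ereal (norm (z - x) ^ 2 / (2 * \<gamma>))
                         \<le> g w + ereal (norm (w - x) ^ 2 / (2 * \<gamma>))}"

definition critical_point ::
  "('a::real_normed_vector \<Rightarrow> 'a) \<Rightarrow> ('a \<Rightarrow> ereal) \<Rightarrow> ereal \<Rightarrow> 'a \<Rightarrow> bool" where
  "critical_point f' g \<gamma>g x \<longleftrightarrow>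
     (\<exists>\<gamma>::real. 0 < \<gamma> \<and> ereal \<gamma> < \<gamma>g \<and> x \<in> prox \<gamma> g (x - \<gamma> *\<^sub>R f' x))"

definition fbe :: "('a::real_inner \<Rightarrow> real) \<Rightarrow> ('a \<Rightarrow> 'a) \<Rightarrow> ('a \<Rightarrow> ereal) \<Rightarrow> real \<Rightarrow> 'a \<Rightarrow> ereal" where
  "fbe f f' g \<gamma> x = (INF u. ereal (f x + f' x \<bullet> (u - x)) + g u
                              + ereal (norm (u - x) ^ 2 / (2 * \<gamma>)))"

text \<open>Regular (Frechet) subgradients and limiting subgradients (Rockafellar--Wets 8.3).\<close>
definition frechet_subdiff :: "('a::real_inner \<Rightarrow> ereal) \<Rightarrow> 'a \<Rightarrow> 'a set" where
  "frechet_subdiff g x = {v. \<bar>g x\<bar> \<noteq> \<infinity> \<and>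
     (\<forall>e>0. \<exists>d>0. \<forall>y. norm (y - x) < d \<longrightarrow>
        g x + ereal (v \<bullet> (y - x) - e * norm (y - x)) \<le> g y)}"

definition limiting_subdiff :: "('a::real_inner \<Rightarrow> ereal) \<Rightarrow> 'a \<Rightarrow> 'a set" where
  "limiting_subdiff g x = {v. \<bar>g x\<bar> \<noteq> \<infinity> \<and>
     (\<exists>X V. X \<longlonglongrightarrow> x \<and> (\<lambda>k. g (X k)) \<longlonglongrightarrow> g x \<and> V \<longlonglongrightarrow> v \<and>
            (\<forall>k. V k \<in> frechet_subdiff g (X k)))}"

text \<open>Prox-regularity of g at xb for vb (Rockafellar--Wets 13.27).\<close>
definition prox_regular_at :: "('a::real_inner \<Rightarrow> ereal) \<Rightarrow> 'a \<Rightarrow> 'a \<Rightarrow> bool" where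
  "prox_regular_at g xb vb \<longleftrightarrow> \<bar>g xb\<bar> \<noteq> \<infinity> \<and> vb \<in> limiting_subdiff g xb \<and>
     (\<exists>r\<ge>0. \<exists>\<epsilon>>0. \<forall>x' \<in> cball xb \<epsilon>. \<forall>x v.
        v \<in> limiting_subdiff g x \<and> norm (x - xb) < \<epsilon> \<and> norm (v - vb) < \<epsilon> \<and> g x \<le> g xb + ereal \<epsilon>
        \<longrightarrow> g x + ereal (v \<bullet> (x' - x) - r / 2 * norm (x' - x) ^ 2) \<le> g x')"

text \<open>Second-order difference quotient (Rockafellar--Wets 13(3)).\<close>
definition second_diff_quot :: "('a::real_inner \<Rightarrow> ereal) \<Rightarrow> 'a \<Rightarrow> 'a \<Rightarrow> real \<Rightarrow> 'a \<Rightarrow> ereal" where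
  "second_diff_quot g x v \<tau> w =
     (g (x + \<tau> *\<^sub>R w) - g x - ereal (\<tau> * (v \<bullet> w))) * ereal (2 / \<tau>\<^sup>2)"

text \<open>Second subderivative (Rockafellar--Wets Def. 13.3).\<close>
definition second_subderiv :: "('a::real_inner \<Rightarrow> ereal) \<Rightarrow> 'a \<Rightarrow> 'a \<Rightarrow> 'a \<Rightarrow> ereal" where
  "second_subderiv g x v w =
     Liminf (at_right 0 \<times>\<^sub>F nhds w) (\<lambda>(\<tau>, w'). second_diff_quot g x v \<tau> w')"

text \<open>Sequential epi-convergence of F k to h (Rockafellar--Wets Prop. 7.2).\<close>
definition epi_converges :: "(nat \<Rightarrow> 'a::topological_space \<Rightarrow> ereal) \<Rightarrow> ('a \<Rightarrow> ereal) \<Rightarrow> bool" where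
  "epi_converges F h \<longleftrightarrow> (\<forall>w.
     (\<forall>W. W \<longlonglongrightarrow> w \<longrightarrow> h w \<le> liminf (\<lambda>k. F k (W k))) \<and>
     (\<exists>W. W \<longlonglongrightarrow> w \<and> limsup (\<lambda>k. F k (W k)) \<le> h w))"

text \<open>Twice epi-differentiability (Rockafellar--Wets Def. 13.6): the quotients
  epi-converge, as tau decreases to 0, to a proper function (necessarily the
  second subderivative).\<close>
definition twice_epi_differentiable :: "('a::real_inner \<Rightarrow> ereal) \<Rightarrow> 'a \<Rightarrow> 'a \<Rightarrow> bool" where
  "twice_epi_differentiable g x v \<longleftrightarrow> \<bar>g x\<bar> \<noteq> \<infinity> \<and>
     (\<exists>h. proper_fun h \<and>
        (\<forall>\<tau>::nat \<Rightarrow> real. (\<forall>k. 0 < \<tau> k) \<and> \<tau> \<longlonglongrightarrow> 0 \<longrightarrow>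
           epi_converges (\<lambda>k. second_diff_quot g x v (\<tau> k)) h))"

definition generalized_quadratic :: "('a::real_inner \<Rightarrow> ereal) \<Rightarrow> bool" where
  "generalized_quadratic h \<longleftrightarrow>
     (\<exists>S M. subspace S \<and> linear M \<and>
        (\<forall>s. h s = (if s \<in> S then ereal (s \<bullet> M s) else \<infinity>)))"

definition twice_diff_at :: "('a::real_inner \<Rightarrow> ereal) \<Rightarrow> 'a \<Rightarrow> ('a \<Rightarrow> 'a) \<Rightarrow> bool" where
  "twice_diff_at \<psi> x H \<longleftrightarrow>
     (\<exists>e>0. \<exists>G. (\<forall>y\<in>ball x e. \<bar>\<psi> y\<bar> \<noteq> \<infinity> \<and>
                   GDERIV (\<lambda>z. real_of_ereal (\<psi> z)) y :> G y) \<and>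
               (G has_derivative H) (at x))"

definition second_order_stationary :: "('a::real_inner \<Rightarrow> ereal) \<Rightarrow> 'a \<Rightarrow> bool" where
  "second_order_stationary \<psi> x \<longleftrightarrow> \<bar>\<psi> x\<bar> \<noteq> \<infinity> \<and>
     0 \<in> limiting_subdiff \<psi> x \<and> (\<forall>d. second_subderiv \<psi> x 0 d \<ge> 0)"

end

theory Submission
  imports Defs
begin

lemma Liminf_le_seq:
  assumes "filterlim X F sequentially"
  shows "Liminf F f \<le> liminf (\<lambda>k. f (X k))"
proof (rule Liminf_least)
  fix P assume "eventually P F"
  then have "eventually (\<lambda>k. P (X k)) sequentially"
    using assms by (simp add: filterlim_iff)
  then have "eventually (\<lambda>k. (INF x\<in>Collect P. f x) \<le> f (X k)) sequentially"
    by (rule eventually_mono) (auto intro: INF_lower)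
  then show "(INF x\<in>Collect P. f x) \<le> liminf (\<lambda>k. f (X k))"
    by (rule Liminf_bounded)
qed


lemma not_eventually_seq_subseq:
  assumes "\<not> eventually P sequentially"
  obtains r :: "nat \<Rightarrow> nat" where "strict_mono r" "\<And>n. \<not> P (r n)"
proof -
  have "infinite {n. \<not> P n}"
  proof
    assume "finite {n. \<not> P n}"
    then obtain k where k: "{n. \<not> P n} \<subseteq> {..<k}" using finite_nat_bounded by blast
    have "\<forall>n\<ge>k. P n"
    proof (intro allI impI)
      fix n assume "k \<le> n"
      show "P n" proof (rule ccontr)
        assume "\<not> P n" then have "n \<in> {..<k}" using k by blast
        with \<open>k \<le> n\<close> show False by simp
      qed
    qed
    then have "eventually P sequentially" unfolding eventually_sequentially by blast
    with assms show False by simp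
  qed
  from infinite_enumerate[OF this] obtain r :: "nat \<Rightarrow> nat" where "strict_mono r" "\<forall>n. r n \<in> {n. \<not> P n}" by blast
  then show ?thesis by (intro that[of r]) auto
qed

lemma subseq_criterion:
  fixes X :: "nat \<Rightarrow> 'b::metric_space"
  assumes "\<And>r::nat\<Rightarrow>nat. strict_mono r \<Longrightarrow> \<exists>s::nat\<Rightarrow>nat. strict_mono s \<and> (\<lambda>n. X (r (s n))) \<longlonglongrightarrow> l"
  shows "X \<longlonglongrightarrow> l"
proof (rule ccontr)
  assume "\<not> X \<longlonglongrightarrow> l"
  then obtain e where e: "e > 0" "\<not> eventually (\<lambda>n. dist (X n) l < e) sequentially"
    unfolding tendsto_iff by auto
  then obtain r :: "nat \<Rightarrow> nat" where r: "strict_mono r" "\<And>n. \<not> dist (X (r n)) l < e"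
    using not_eventually_seq_subseq by blast
  from assms[OF r(1)] obtain s :: "nat \<Rightarrow> nat" where s: "strict_mono s" "(\<lambda>n. X (r (s n))) \<longlonglongrightarrow> l" by blast
  then have "eventually (\<lambda>n. dist (X (r (s n))) l < e) sequentially"
    using e(1) unfolding tendsto_iff by blast
  then obtain N where "\<forall>n\<ge>N. dist (X (r (s n))) l < e" unfolding eventually_sequentially by blast
  then have "dist (X (r (s N))) l < e" by simp
  with r(2) show False by blast
qed

lemma freq_seq:
  fixes u :: "'a::metric_space"
  assumes "\<not> eventually P (at_right (0::real) \<times>\<^sub>F nhds u)"
  obtains \<tau> w where "\<And>k. 0 < \<tau> k" "\<tau> \<longlonglongrightarrow> 0" "w \<longlonglongrightarrow> u" "\<And>k. \<not> P (\<tau> k, w k)"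
proof -
  have "\<exists>p. (0 < fst p \<and> fst p < inverse (real (Suc k)) \<and> dist (snd p) u < inverse (real (Suc k))) \<and> \<not> P p" for k
  proof (rule ccontr)
    let ?Q = "\<lambda>p. 0 < fst p \<and> fst p < inverse (real (Suc k)) \<and> dist (snd p) u < inverse (real (Suc k))"
    assume "\<not> ?thesis"
    then have *: "\<And>p. ?Q p \<Longrightarrow> P p" by blast
    have "eventually ?Q (at_right (0::real) \<times>\<^sub>F nhds u)"
      unfolding eventually_prod_filter
    proof (intro exI conjI)
      show "eventually (\<lambda>t::real. 0 < t \<and> t < inverse (real (Suc k))) (at_right 0)"
        using eventually_at_right_real[of 0 "inverse (real (Suc k))"] by (auto elim!: eventually_mono)
      show "eventually (\<lambda>y. dist y u < inverse (real (Suc k))) (nhds u)"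
        by (rule eventually_nhds_in_open[of "ball u (inverse (real (Suc k)))", THEN eventually_mono])
           (auto simp: dist_commute)
    qed auto
    then have "eventually P (at_right (0::real) \<times>\<^sub>F nhds u)" by (rule eventually_mono) (use * in auto)
    with assms show False by simp
  qed
  then obtain p where p: "\<And>k. (0 < fst (p k) \<and> fst (p k) < inverse (real (Suc k)) \<and> dist (snd (p k)) u < inverse (real (Suc k))) \<and> \<not> P (p k)"
    by metis
  show ?thesis
  proof (rule that[of "\<lambda>k. fst (p k)" "\<lambda>k. snd (p k)"])
    show "0 < fst (p k)" for k using p by auto
    have "norm (fst (p k)) \<le> inverse (real (Suc k))" for k
      using p[of k] by simp
    then show "(\<lambda>k. fst (p k)) \<longlonglongrightarrow> 0"
      by (intro Lim_null_comparison[OF _ LIMSEQ_inverse_real_of_nat] always_eventually) auto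
    have "(\<lambda>k. dist (snd (p k)) u) \<longlonglongrightarrow> 0"
      by (rule Lim_null_comparison[OF _ LIMSEQ_inverse_real_of_nat]) (use p in \<open>auto intro!: always_eventually less_imp_le\<close>)
    then show "(\<lambda>k. snd (p k)) \<longlonglongrightarrow> u" using tendsto_dist_iff by blast
    show "\<not> P (fst (p k), snd (p k))" for k using p by auto
  qed
qed


lemma seq_filterlim_prod:
  fixes u :: "'a::topological_space"
  assumes "\<And>k. 0 < \<tau> k" "\<tau> \<longlonglongrightarrow> (0::real)" "w \<longlonglongrightarrow> u"
  shows "filterlim (\<lambda>k. (\<tau> k, w k)) (at_right 0 \<times>\<^sub>F nhds u) sequentially"
  by (rule filterlim_Pair) (auto intro!: tendsto_imp_filterlim_at_right assms always_eventually)




lemma nsq_add: "(norm (a + b))^2 = (norm a)^2 + 2 * (a \<bullet> b) + (norm (b::'a::real_inner))^2"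
  by (simp add: power2_norm_eq_inner inner_add_left inner_add_right inner_commute)

lemma nsq_diff: "(norm (a - b))^2 = (norm a)^2 - 2 * (a \<bullet> b) + (norm (b::'a::real_inner))^2"
  by (simp add: power2_norm_eq_inner inner_diff_left inner_diff_right inner_commute)

lemma lsc_seq:
  assumes "lsc_fun g" "X \<longlonglongrightarrow> z"
  shows "g z \<le> liminf (\<lambda>k. g (X k))"
proof (unfold le_Liminf_iff, intro allI impI)
  fix y assume y: "y < g z"
  have "g z \<le> Liminf (at z) g" using assms(1) unfolding lsc_fun_def by blast
  then have "eventually (\<lambda>x. y < g x) (at z)" using y le_Liminf_iff by blast
  then have "eventually (\<lambda>x. x \<noteq> z \<longrightarrow> y < g x) (nhds z)"
    unfolding eventually_at_filter by (rule eventually_mono) auto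
  then have "eventually (\<lambda>x. y < g x) (nhds z)"
    by (rule eventually_mono) (use y in auto)
  then show "eventually (\<lambda>k. y < g (X k)) sequentially"
    using assms(2) unfolding filterlim_iff by blast
qed

locale base =
  fixes f :: "'a::euclidean_space \<Rightarrow> real" and f' :: "'a \<Rightarrow> 'a" and L :: real
    and g :: "'a \<Rightarrow> ereal" and x0 v0 :: 'a and g0 \<gamma>1 :: real
  assumes grad: "\<And>x. GDERIV f x :> f' x"
    and lip: "L-lipschitz_on UNIV f'"
    and g_nm: "\<And>x. g x \<noteq> -\<infinity>"
    and g_lsc: "lsc_fun g"
    and g0: "g x0 = ereal g0"
    and v0: "v0 = - f' x0"
    and \<gamma>1: "0 < \<gamma>1"
    and glb: "\<And>z. ereal (g0 + v0 \<bullet> (z - x0) - (norm (z - x0))^2 / (2*\<gamma>1)) \<le> g z"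
begin

lemma L_nonneg: "0 \<le> L" using lip unfolding lipschitz_on_def by blast

lemma f'_lip: "norm (f' x - f' y) \<le> L * norm (x - y)"
  using lip unfolding lipschitz_on_def by (simp add: dist_norm)

end

locale gam = base +
  fixes \<gamma> :: real
  assumes \<gamma>pos: "0 < \<gamma>" and \<gamma>lt: "\<gamma> < \<gamma>1" and \<gamma>L: "2 * L * \<gamma> < 1"
begin

definition "Phi y z = g z + ereal ((norm (z - y))^2 / (2*\<gamma>))"
definition "y0 = x0 + \<gamma> *\<^sub>R v0"
definition "cc = 1/(2*\<gamma>) - 1/(2*\<gamma>1)"

lemma cc_pos: "0 < cc"
  using \<gamma>pos \<gamma>lt unfolding cc_def by (simp add: frac_less2)

lemma prox_iff: "x \<in> prox \<gamma> g y \<longleftrightarrow> (\<forall>w. Phi y x \<le> Phi y w)"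
  unfolding prox_def Phi_def by simp

lemma KI_real:
  "g0 + v0 \<bullet> (z - x0) - (norm (z - x0))^2 / (2*\<gamma>1) + (norm (z - y))^2 / (2*\<gamma>)
   = g0 + (norm (x0 - y))^2 / (2*\<gamma>) + cc * (norm (z - x0))^2 + (z - x0) \<bullet> (y0 - y) / \<gamma>"
proof -
  have e1: "z - y = (z - x0) + (x0 - y)" by simp
  have e2: "y0 - y = (x0 - y) + \<gamma> *\<^sub>R v0" unfolding y0_def by simp
  have "(norm (z - y))^2 = (norm (z - x0))^2 + 2 * ((z - x0) \<bullet> (x0 - y)) + (norm (x0 - y))^2"
    by (subst e1, rule nsq_add)
  moreover have "(z - x0) \<bullet> (y0 - y) = (z - x0) \<bullet> (x0 - y) + \<gamma> * ((z - x0) \<bullet> v0)"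
    by (subst e2) (simp add: inner_add_right)
  ultimately show ?thesis using \<gamma>pos \<gamma>1 unfolding cc_def
    by (simp add: field_simps inner_commute)
qed

lemma KI:
  "ereal (g0 + (norm (x0 - y))^2 / (2*\<gamma>) + cc * (norm (z - x0))^2 + (z - x0) \<bullet> (y0 - y) / \<gamma>) \<le> Phi y z"
proof -
  have "ereal (g0 + v0 \<bullet> (z - x0) - (norm (z - x0))^2 / (2*\<gamma>1)) + ereal ((norm (z - y))^2 / (2*\<gamma>)) \<le> Phi y z"
    unfolding Phi_def by (intro add_right_mono glb)
  then show ?thesis using KI_real by simp
qed

lemma Phi_x0: "Phi y x0 = ereal (g0 + (norm (x0 - y))^2 / (2*\<gamma>))"
  unfolding Phi_def g0 by simp

lemma calm:
  assumes "x \<in> prox \<gamma> g y"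
  shows "norm (x - x0) \<le> norm (y - y0) / (\<gamma> * cc)"
proof -
  have "Phi y x \<le> Phi y x0" using assms prox_iff by blast
  then have "ereal (g0 + (norm (x0 - y))^2 / (2*\<gamma>) + cc * (norm (x - x0))^2 + (x - x0) \<bullet> (y0 - y) / \<gamma>)
     \<le> ereal (g0 + (norm (x0 - y))^2 / (2*\<gamma>))"
    using KI[of y x] Phi_x0[of y] by (metis order_trans)
  then have
    "cc * (norm (x - x0))^2 + (x - x0) \<bullet> (y0 - y) / \<gamma> \<le> 0" by simp
  moreover have "- ((x - x0) \<bullet> (y0 - y)) \<le> norm (x - x0) * norm (y - y0)"
    using norm_cauchy_schwarz[of "x - x0" "y - y0"] by (simp add: inner_diff_right)
  ultimately have "cc * (norm (x - x0))^2 \<le> norm (x - x0) * norm (y - y0) / \<gamma>"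
    using \<gamma>pos by (simp add: field_simps)
  then have "(\<gamma> * cc) * (norm (x - x0) * norm (x - x0)) \<le> norm (y - y0) * norm (x - x0)"
    using \<gamma>pos by (simp add: field_simps power2_eq_square)
  then have "(\<gamma> * cc * norm (x - x0)) * norm (x - x0) \<le> norm (y - y0) * norm (x - x0)"
    by (simp add: algebra_simps)
  then have "norm (x - x0) = 0 \<or> \<gamma> * cc * norm (x - x0) \<le> norm (y - y0)"
    by (metis mult_right_le_imp_le norm_ge_zero order_le_less)
  then show ?thesis using \<gamma>pos cc_pos by (auto simp: field_simps)
qed

end

lemma quad_lb: "0 < (c::real) \<Longrightarrow> - (b^2/(4*c)) \<le> c*t^2 - b*t"
proof -
  assume c: "0 < c"
  have "0 \<le> (2*c*t - b)^2" by simp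
  also have "\<dots> = 4*c*(c*t^2 - b*t) + b^2" by (simp add: power2_eq_square algebra_simps)
  finally have "- (b^2) \<le> 4*c*(c*t^2 - b*t)" by simp
  then show ?thesis using c by (simp add: field_simps)
qed

context gam begin

lemma Phi_lb:
  "ereal (g0 + (norm (x0 - y))^2 / (2*\<gamma>) + cc * (norm (z - x0))^2 - norm (y0 - y) / \<gamma> * norm (z - x0)) \<le> Phi y z"
proof -
  have "- ((z - x0) \<bullet> (y0 - y)) \<le> norm (z - x0) * norm (y0 - y)"
    using norm_cauchy_schwarz[of "z - x0" "-(y0 - y)"] by (simp add: inner_diff_right norm_minus_commute)
  then have "- (norm (y0 - y) / \<gamma> * norm (z - x0)) \<le> (z - x0) \<bullet> (y0 - y) / \<gamma>"
    using \<gamma>pos by (simp add: field_simps)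
  then have "ereal (g0 + (norm (x0 - y))^2 / (2*\<gamma>) + cc * (norm (z - x0))^2 - norm (y0 - y) / \<gamma> * norm (z - x0))
     \<le> ereal (g0 + (norm (x0 - y))^2 / (2*\<gamma>) + cc * (norm (z - x0))^2 + (z - x0) \<bullet> (y0 - y) / \<gamma>)"
    by simp
  then show ?thesis using KI order_trans by blast
qed

lemma Phi_cont_part:
  assumes "X \<longlonglongrightarrow> l"
  shows "Phi y l \<le> liminf (\<lambda>k. Phi y (X k))"
proof -
  have c: "(\<lambda>k. ereal ((norm (X k - y))^2 / (2*\<gamma>))) \<longlonglongrightarrow> ereal ((norm (l - y))^2 / (2*\<gamma>))"
    using \<gamma>pos by (intro tendsto_ereal tendsto_intros assms) auto
  have "liminf (\<lambda>k. Phi y (X k)) = liminf (\<lambda>k. ereal ((norm (X k - y))^2 / (2*\<gamma>)) + g (X k))"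
    unfolding Phi_def by (simp add: add.commute)
  also have "\<dots> = ereal ((norm (l - y))^2 / (2*\<gamma>)) + liminf (\<lambda>k. g (X k))"
    by (rule ereal_liminf_lim_add[OF c]) simp
  finally have eq: "liminf (\<lambda>k. Phi y (X k)) = ereal ((norm (l - y))^2 / (2*\<gamma>)) + liminf (\<lambda>k. g (X k))" .
  have "g l \<le> liminf (\<lambda>k. g (X k))" by (rule lsc_seq[OF g_lsc assms])
  then have "ereal ((norm (l - y))^2 / (2*\<gamma>)) + g l \<le> ereal ((norm (l - y))^2 / (2*\<gamma>)) + liminf (\<lambda>k. g (X k))"
    by (rule add_left_mono)
  moreover have "Phi y l = ereal ((norm (l - y))^2 / (2*\<gamma>)) + g l" unfolding Phi_def by (simp add: add.commute)
  ultimately show ?thesis using eq by simp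
qed

lemma prox_exists: "\<exists>x. x \<in> prox \<gamma> g y"
proof -
  define a0 where "a0 = g0 + (norm (x0 - y))^2 / (2*\<gamma>)"
  define b where "b = norm (y0 - y) / \<gamma>"
  define m where "m = (INF z. Phi y z)"
  have lb: "ereal (a0 + cc * (norm (z - x0))^2 - b * norm (z - x0)) \<le> Phi y z" for z
    using Phi_lb[of y z] unfolding a0_def b_def by (simp add: algebra_simps)
  have lb2: "ereal (a0 - b^2/(4*cc)) \<le> Phi y z" for z
  proof -
    have "a0 - b^2/(4*cc) \<le> a0 + cc * (norm (z - x0))^2 - b * norm (z - x0)"
      using quad_lb[OF cc_pos, of b "norm (z - x0)"] by simp
    then show ?thesis using lb[of z] by (meson ereal_less_eq(3) order_trans)
  qed
  have m_lb: "ereal (a0 - b^2/(4*cc)) \<le> m" unfolding m_def by (rule INF_greatest) (rule lb2)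
  have m_ub: "m \<le> ereal a0" unfolding m_def a0_def using Phi_x0[of y] by (metis INF_lower UNIV_I)
  obtain mr where mr: "m = ereal mr" using m_lb m_ub by (cases m) auto
  have "\<exists>z. Phi y z < ereal (mr + inverse (real (Suc k)))" for k
  proof -
    have "m < ereal (mr + inverse (real (Suc k)))" using mr by simp
    then show ?thesis unfolding m_def by (simp add: INF_less_iff)
  qed
  then obtain zs where zs: "\<And>k. Phi y (zs k) < ereal (mr + inverse (real (Suc k)))" by metis
  define R where "R = max 1 ((b + 1)/cc)"
  have zsR: "norm (zs k - x0) \<le> R" for k
  proof -
    have "inverse (real (Suc k)) \<le> 1" by (simp add: field_simps)
    then have "ereal (a0 + cc * (norm (zs k - x0))^2 - b * norm (zs k - x0)) < ereal (a0 + 1)"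
    proof -
      have "mr \<le> a0" using mr m_ub by simp
      then have "ereal (mr + inverse (real (Suc k))) \<le> ereal (a0 + 1)"
        using \<open>inverse (real (Suc k)) \<le> 1\<close> by simp
      then have "Phi y (zs k) < ereal (a0 + 1)" by (rule order_less_le_trans[OF zs[of k]])
      then show ?thesis using lb[of "zs k"] by (rule le_less_trans[rotated])
    qed
    then have t: "cc * (norm (zs k - x0))^2 - b * norm (zs k - x0) < 1" by simp
    show ?thesis
    proof (cases "norm (zs k - x0) \<le> 1")
      case True then show ?thesis unfolding R_def by simp
    next
      case False
      then have "cc * (norm (zs k - x0))^2 < norm (zs k - x0) + b * norm (zs k - x0)" using t by simp
      then have "cc * norm (zs k - x0) * norm (zs k - x0) < (1 + b) * norm (zs k - x0)"
        by (simp add: power2_eq_square algebra_simps)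
      then have "cc * norm (zs k - x0) < 1 + b" using False by (simp add: mult_less_cancel_right)
      then have "norm (zs k - x0) \<le> (b + 1)/cc" using cc_pos by (simp add: field_simps)
      then show ?thesis unfolding R_def by simp
    qed
  qed
  have "bounded (range zs)"
    by (rule bounded_subset[OF bounded_cball[of x0 R]]) (use zsR in \<open>auto simp: dist_norm norm_minus_commute\<close>)
  then obtain l and r :: "nat \<Rightarrow> nat" where r: "strict_mono r" "(zs \<circ> r) \<longlonglongrightarrow> l"
    using bounded_imp_convergent_subsequence by blast
  have "Phi y l \<le> ereal mr + ereal e" if e: "e > 0" for e
  proof -
    have "(\<lambda>k. inverse (real (Suc (r k)))) \<longlonglongrightarrow> 0"
      using LIMSEQ_subseq_LIMSEQ[OF LIMSEQ_inverse_real_of_nat r(1)] by (simp add: o_def)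
    then have "eventually (\<lambda>k. inverse (real (Suc (r k))) < e) sequentially"
      using e by (rule order_tendstoD)
    then have "eventually (\<lambda>k. Phi y (zs (r k)) \<le> ereal (mr + e)) sequentially"
    proof (rule eventually_mono)
      fix k assume "inverse (real (Suc (r k))) < e"
      then have "ereal (mr + inverse (real (Suc (r k)))) \<le> ereal (mr + e)" by simp
      then show "Phi y (zs (r k)) \<le> ereal (mr + e)" using zs[of "r k"] by (meson less_imp_le order_trans)
    qed
    then have "liminf (\<lambda>k. Phi y (zs (r k))) \<le> ereal (mr + e)"
      by (intro Liminf_le) simp_all
    moreover have "Phi y l \<le> liminf (\<lambda>k. Phi y (zs (r k)))"
      using Phi_cont_part[of "zs \<circ> r" l] r(2) by (simp add: o_def)
    ultimately show ?thesis by simp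
  qed
  then have "Phi y l \<le> ereal mr" by (rule ereal_le_epsilon2)
  then have "\<forall>w. Phi y l \<le> Phi y w" using mr unfolding m_def by (metis INF_lower UNIV_I order_trans)
  then show ?thesis using prox_iff by blast
qed

end

lemma ereal_cancel_aff:
  assumes "0 < a" "ereal C + ereal a * X \<le> ereal C + ereal a * Y"
  shows "X \<le> Y"
  using assms by (cases X; cases Y) (auto simp: ereal_mult_le_mult_iff)

context gam begin

definition "Pr y = (SOME x. x \<in> prox \<gamma> g y)"

lemma Pr_in: "Pr y \<in> prox \<gamma> g y"
  unfolding Pr_def using prox_exists by (metis someI_ex)

lemma Pr_y0: "Pr y0 = x0"
  using calm[OF Pr_in[of y0]] by simp

lemma prox_fin: "x \<in> prox \<gamma> g y \<Longrightarrow> g x = ereal (real_of_ereal (g x))"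
proof -
  assume "x \<in> prox \<gamma> g y"
  then have "Phi y x \<le> Phi y x0" using prox_iff by blast
  then have "g x \<noteq> \<infinity>" using Phi_x0[of y] unfolding Phi_def by auto
  then show ?thesis using g_nm[of x] by (cases "g x") auto
qed

definition "Dq t w = second_diff_quot g x0 v0 t w"
definition "hh w = second_subderiv g x0 v0 w"

lemma hh_Liminf: "hh w = Liminf (at_right 0 \<times>\<^sub>F nhds w) (\<lambda>(t, w'). Dq t w')"
  unfolding hh_def second_subderiv_def Dq_def by simp

lemma E1:
  assumes t: "0 < t"
  shows "Phi (y0 + t *\<^sub>R u) (x0 + t *\<^sub>R w)
    = ereal (g0 + t * (v0 \<bullet> u) + \<gamma> * (norm v0)^2 / 2) + ereal (t^2/2) * (Dq t w + ereal ((norm (w - u))^2 / \<gamma>))"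
proof (cases "g (x0 + t *\<^sub>R w) = \<infinity>")
  case True
  then show ?thesis using t unfolding Phi_def Dq_def second_diff_quot_def g0 by simp
next
  case False
  then obtain G where G: "g (x0 + t *\<^sub>R w) = ereal G" using g_nm[of "x0 + t *\<^sub>R w"] by (cases "g (x0 + t *\<^sub>R w)") auto
  have e: "x0 + t *\<^sub>R w - (y0 + t *\<^sub>R u) = t *\<^sub>R (w - u) - \<gamma> *\<^sub>R v0" unfolding y0_def by (simp add: algebra_simps)
  have n: "(norm (x0 + t *\<^sub>R w - (y0 + t *\<^sub>R u)))^2 = t^2 * (norm (w - u))^2 - 2 * t * \<gamma> * ((w - u) \<bullet> v0) + \<gamma>^2 * (norm v0)^2"
    unfolding e nsq_diff[of "t *\<^sub>R (w - u)" "\<gamma> *\<^sub>R v0"] by (simp add: power_mult_distrib)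
  have "G + (norm (x0 + t *\<^sub>R w - (y0 + t *\<^sub>R u)))^2 / (2*\<gamma>)
     = g0 + t * (v0 \<bullet> u) + \<gamma> * (norm v0)^2 / 2 + t^2/2 * ((G - g0 - t * (v0 \<bullet> w)) * (2/t^2) + (norm (w - u))^2 / \<gamma>)"
    unfolding n using t \<gamma>pos by (simp add: field_simps power2_eq_square inner_diff_left inner_diff_right inner_commute)
  then show ?thesis unfolding Phi_def Dq_def second_diff_quot_def g0 G by simp
qed

lemma min_ineq:
  assumes t: "0 < t" and x: "x \<in> prox \<gamma> g (y0 + t *\<^sub>R u)"
  shows "Dq t ((x - x0) /\<^sub>R t) + ereal ((norm ((x - x0) /\<^sub>R t - u))^2 / \<gamma>) \<le> Dq t W + ereal ((norm (W - u))^2 / \<gamma>)"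
proof -
  have xe: "x = x0 + t *\<^sub>R ((x - x0) /\<^sub>R t)" using t by simp
  have "Phi (y0 + t *\<^sub>R u) x \<le> Phi (y0 + t *\<^sub>R u) (x0 + t *\<^sub>R W)" using x prox_iff by blast
  then have "Phi (y0 + t *\<^sub>R u) (x0 + t *\<^sub>R ((x - x0) /\<^sub>R t)) \<le> Phi (y0 + t *\<^sub>R u) (x0 + t *\<^sub>R W)"
    using xe by simp
  then show ?thesis unfolding E1[OF t] by (rule ereal_cancel_aff[rotated]) (use t in simp)
qed

lemma K1:
  assumes "\<And>k. 0 < t k" "t \<longlonglongrightarrow> 0" "W \<longlonglongrightarrow> w"
  shows "hh w \<le> liminf (\<lambda>k. Dq (t k) (W k))"
  using Liminf_le_seq[OF seq_filterlim_prod[OF assms], of "\<lambda>(t, w'). Dq t w'"]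
  unfolding hh_Liminf by simp

end

locale gamq = gam +
  fixes S :: "'a set" and M :: "'a \<Rightarrow> 'a"
  assumes epi: "twice_epi_differentiable g x0 v0"
    and S: "subspace S" and M: "linear M"
    and gq: "\<And>s. second_subderiv g x0 v0 s = (if s \<in> S then ereal (s \<bullet> M s) else \<infinity>)"
begin

lemma hh_eq: "hh s = (if s \<in> S then ereal (s \<bullet> M s) else \<infinity>)"
  unfolding hh_def gq ..

lemma K2:
  assumes t: "\<And>k. 0 < t k" "t \<longlonglongrightarrow> 0"
  shows "\<exists>W. W \<longlonglongrightarrow> w \<and> limsup (\<lambda>k. Dq (t k) (W k)) \<le> hh w"
proof -
  from epi obtain h' where h': "\<And>\<tau>. (\<forall>k. 0 < \<tau> k) \<and> \<tau> \<longlonglongrightarrow> 0 \<Longrightarrow> epi_converges (\<lambda>k. Dq (\<tau> k)) h'"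
    unfolding twice_epi_differentiable_def Dq_def by blast
  have "h' w \<le> hh w"
    unfolding hh_Liminf le_Liminf_iff
  proof (intro allI impI)
    fix y assume y: "y < h' w"
    show "eventually (\<lambda>p. y < (case p of (t, w') \<Rightarrow> Dq t w')) (at_right 0 \<times>\<^sub>F nhds w)"
    proof (rule ccontr)
      assume "\<not> ?thesis"
      then obtain \<tau> w' where tw: "\<And>k. 0 < \<tau> k" "\<tau> \<longlonglongrightarrow> 0" "w' \<longlonglongrightarrow> w" "\<And>k. \<not> y < Dq (\<tau> k) (w' k)"
        by (rule freq_seq) auto
      have "h' w \<le> liminf (\<lambda>k. Dq (\<tau> k) (w' k))"
        using h'[of \<tau>] tw(1,2,3) unfolding epi_converges_def by blast
      also have "\<dots> \<le> y" by (intro Liminf_le) (use tw(4) in \<open>auto simp: not_less\<close>)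
      finally show False using y by simp
    qed
  qed
  moreover obtain W where "W \<longlonglongrightarrow> w" "limsup (\<lambda>k. Dq (t k) (W k)) \<le> h' w"
    using h'[of t] t unfolding epi_converges_def by blast
  ultimately show ?thesis by (meson order_trans)
qed

end

context gam begin

lemma Dq_lb:
  assumes t: "0 < t"
  shows "ereal (- ((norm w)^2) / \<gamma>1) \<le> Dq t w"
proof (cases "g (x0 + t *\<^sub>R w) = \<infinity>")
  case True
  then show ?thesis using t unfolding Dq_def second_diff_quot_def g0 by simp
next
  case False
  then obtain G where G: "g (x0 + t *\<^sub>R w) = ereal G" using g_nm[of "x0 + t *\<^sub>R w"] by (cases "g (x0 + t *\<^sub>R w)") auto
  have "g0 + v0 \<bullet> (t *\<^sub>R w) - (norm (t *\<^sub>R w))^2 / (2*\<gamma>1) \<le> G"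
    using glb[of "x0 + t *\<^sub>R w"] G by simp
  then have "g0 + t * (v0 \<bullet> w) - t^2 * (norm w)^2 / (2*\<gamma>1) \<le> G"
    by (simp add: power_mult_distrib)
  then have "- (t^2 * (norm w)^2) / (2*\<gamma>1) \<le> G - g0 - t * (v0 \<bullet> w)" by simp
  then have "(- (t^2 * (norm w)^2) / (2*\<gamma>1)) * (2/t^2) \<le> (G - g0 - t * (v0 \<bullet> w)) * (2/t^2)"
    by (rule mult_right_mono) simp
  then have "- ((norm w)^2) / \<gamma>1 \<le> (G - g0 - t * (v0 \<bullet> w)) * (2/t^2)"
    using t \<gamma>1 by (simp add: field_simps)
  then show ?thesis unfolding Dq_def second_diff_quot_def g0 G by simp
qed

lemma K3: "ereal (- ((norm w)^2) / \<gamma>1) \<le> hh w"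
  unfolding hh_Liminf le_Liminf_iff
proof (intro allI impI)
  fix y assume y: "y < ereal (- ((norm w)^2) / \<gamma>1)"
  have "((\<lambda>w'. ereal (- ((norm w')^2) / \<gamma>1)) \<longlongrightarrow> ereal (- ((norm w)^2) / \<gamma>1)) (nhds w)"
    using \<gamma>1 by (intro tendsto_ereal tendsto_intros filterlim_ident) auto
  then have ev: "eventually (\<lambda>w'. y < ereal (- ((norm w')^2) / \<gamma>1)) (nhds w)"
    using y by (rule order_tendstoD(1))
  show "eventually (\<lambda>p. y < (case p of (t, w') \<Rightarrow> Dq t w')) (at_right 0 \<times>\<^sub>F nhds w)"
    unfolding eventually_prod_filter
  proof (intro exI conjI allI impI)
    show "eventually (\<lambda>t::real. 0 < t) (at_right 0)" by (rule eventually_at_right_less)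
    show "eventually (\<lambda>w'. y < ereal (- ((norm w')^2) / \<gamma>1)) (nhds w)" by (rule ev)
    fix t :: real and w' :: 'a assume "0 < t" "y < ereal (- ((norm w')^2) / \<gamma>1)"
    then show "y < (case (t, w') of (t, w') \<Rightarrow> Dq t w')"
      using Dq_lb[of t w'] by simp
  qed
qed

end

context gamq begin

lemma K4:
  assumes t: "\<And>k. 0 < t k" "t \<longlonglongrightarrow> 0" and u: "uu \<longlonglongrightarrow> u"
    and x: "\<And>k. xs k \<in> prox \<gamma> g (y0 + t k *\<^sub>R uu k)"
    and w: "(\<lambda>k. (xs k - x0) /\<^sub>R t k) \<longlonglongrightarrow> wb"
  shows "hh wb + ereal ((norm (wb - u))^2 / \<gamma>) \<le> hh w + ereal ((norm (w - u))^2 / \<gamma>)"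
proof -
  define wk where "wk = (\<lambda>k. (xs k - x0) /\<^sub>R t k)"
  obtain W where W: "W \<longlonglongrightarrow> w" "limsup (\<lambda>k. Dq (t k) (W k)) \<le> hh w"
    using K2[OF t] by blast
  have ineq: "Dq (t k) (wk k) + ereal ((norm (wk k - uu k))^2 / \<gamma>) \<le> Dq (t k) (W k) + ereal ((norm (W k - uu k))^2 / \<gamma>)" for k
    unfolding wk_def by (rule min_ineq[OF t(1) x])
  have wk: "wk \<longlonglongrightarrow> wb" using w unfolding wk_def .
  have \<alpha>: "(\<lambda>k. ereal ((norm (wk k - uu k))^2 / \<gamma>)) \<longlonglongrightarrow> ereal ((norm (wb - u))^2 / \<gamma>)"
    using \<gamma>pos by (intro tendsto_ereal tendsto_intros wk u) auto
  have \<beta>: "(\<lambda>k. ereal ((norm (W k - uu k))^2 / \<gamma>)) \<longlonglongrightarrow> ereal ((norm (w - u))^2 / \<gamma>)"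
    using \<gamma>pos by (intro tendsto_ereal tendsto_intros W u) auto
  have "hh wb \<le> liminf (\<lambda>k. Dq (t k) (wk k))" by (rule K1[OF t wk])
  then have "ereal ((norm (wb - u))^2 / \<gamma>) + hh wb \<le> ereal ((norm (wb - u))^2 / \<gamma>) + liminf (\<lambda>k. Dq (t k) (wk k))"
    by (rule add_left_mono)
  also have "\<dots> = liminf (\<lambda>k. ereal ((norm (wk k - uu k))^2 / \<gamma>) + Dq (t k) (wk k))"
    by (rule ereal_liminf_lim_add[OF \<alpha>, symmetric]) simp
  also have "\<dots> \<le> liminf (\<lambda>k. ereal ((norm (W k - uu k))^2 / \<gamma>) + Dq (t k) (W k))"
    by (intro Liminf_mono always_eventually allI) (use ineq in \<open>simp add: add.commute\<close>)
  also have "\<dots> \<le> limsup (\<lambda>k. ereal ((norm (W k - uu k))^2 / \<gamma>) + Dq (t k) (W k))"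
    by (rule Liminf_le_Limsup) simp
  also have "\<dots> = ereal ((norm (w - u))^2 / \<gamma>) + limsup (\<lambda>k. Dq (t k) (W k))"
    by (rule ereal_limsup_lim_add[OF \<beta>]) simp
  also have "\<dots> \<le> ereal ((norm (w - u))^2 / \<gamma>) + hh w"
    by (rule add_left_mono[OF W(2)])
  finally show ?thesis by (simp add: add.commute)
qed

end

context gamq begin

definition "ismin u w \<longleftrightarrow> (\<forall>w'. hh w + ereal ((norm (w - u))^2 / \<gamma>) \<le> hh w' + ereal ((norm (w' - u))^2 / \<gamma>))"
definition "Jr u w = w \<bullet> M w + (norm (w - u))^2 / \<gamma>"
definition "Lin u w d = d \<bullet> M w + w \<bullet> M d + 2 * (d \<bullet> (w - u)) / \<gamma>"
definition "Qf d = d \<bullet> M d + (norm d)^2 / \<gamma>"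

lemma Mlin: "M (a + b) = M a + M b" "M (c *\<^sub>R a) = c *\<^sub>R M a" "M (a - b) = M a - M b" "M 0 = 0"
  using M by (simp_all add: linear_add linear_scale linear_diff linear_0)

lemma Q_lb: "d \<in> S \<Longrightarrow> 2 * cc * (norm d)^2 \<le> Qf d"
proof -
  assume d: "d \<in> S"
  have "ereal (- ((norm d)^2) / \<gamma>1) \<le> ereal (d \<bullet> M d)" using K3[of d] hh_eq[of d] d by simp
  then have "- ((norm d)^2) / \<gamma>1 \<le> d \<bullet> M d" by simp
  moreover have "2*cc*(norm d)^2 = (norm d)^2/\<gamma> - (norm d)^2/\<gamma>1" unfolding cc_def by (simp add: field_simps)
  ultimately show ?thesis unfolding Qf_def by simp
qed

lemma Q_nonneg: "d \<in> S \<Longrightarrow> 0 \<le> Qf d"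
  using Q_lb[of d] cc_pos by (smt (verit) mult_nonneg_nonneg zero_le_power2)

lemma J_expand: "Jr u (w + s *\<^sub>R d) = Jr u w + s * Lin u w d + s^2 * Qf d"
proof -
  have e: "w + s *\<^sub>R d - u = (w - u) + s *\<^sub>R d" by simp
  have "(norm (w + s *\<^sub>R d - u))^2 = (norm (w - u))^2 + 2 * s * (d \<bullet> (w - u)) + s^2 * (norm d)^2"
    unfolding e nsq_add[of "w - u" "s *\<^sub>R d"] by (simp add: power_mult_distrib inner_commute)
  then show ?thesis unfolding Jr_def Lin_def Qf_def
    using \<gamma>pos by (simp add: Mlin inner_add_left inner_add_right field_simps power2_eq_square)
qed

lemma hh_S: "w \<in> S \<Longrightarrow> hh w + ereal ((norm (w - u))^2 / \<gamma>) = ereal (Jr u w)"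
  unfolding hh_eq Jr_def by simp

lemma hh_notS: "w \<notin> S \<Longrightarrow> hh w + ereal ((norm (w - u))^2 / \<gamma>) = \<infinity>"
  unfolding hh_eq by simp

lemma ismin_S: "ismin u w \<Longrightarrow> w \<in> S"
proof (rule ccontr)
  assume "ismin u w" "w \<notin> S"
  then have "hh w + ereal ((norm (w - u))^2 / \<gamma>) \<le> hh 0 + ereal ((norm (0 - u))^2 / \<gamma>)"
    unfolding ismin_def by blast
  then show False using hh_notS[OF \<open>w \<notin> S\<close>] hh_S[OF subspace_0[OF S]] by simp
qed

lemma quad_zero:
  assumes "\<And>s::real. 0 \<le> s * a + s^2 * b" shows "a = 0"
proof (rule ccontr)
  assume a: "a \<noteq> 0"
  define c where "c = \<bar>b\<bar> + 1"
  have pos: "0 < c" unfolding c_def by simp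
  define s where "s = - a / c"
  have "s * a + s^2 * b \<le> s * a + s^2 * (c - 1)"
    unfolding c_def by (intro add_left_mono mult_left_mono) auto
  also have "\<dots> = - (a^2) / c^2"
    unfolding s_def using pos by (simp add: power2_eq_square field_simps)
  also have "\<dots> < 0" using a pos by simp
  finally show False using assms[of s] by simp
qed

lemma ismin_FOC: "ismin u w \<longleftrightarrow> w \<in> S \<and> (\<forall>d\<in>S. Lin u w d = 0)"
proof
  assume m: "ismin u w"
  have w: "w \<in> S" by (rule ismin_S[OF m])
  show "w \<in> S \<and> (\<forall>d\<in>S. Lin u w d = 0)"
  proof (intro conjI ballI w)
    fix d assume d: "d \<in> S"
    show "Lin u w d = 0"
    proof (rule quad_zero[of _ "Qf d"])
      fix s :: real
      have ws: "w + s *\<^sub>R d \<in> S" using S w d by (simp add: subspace_add subspace_mul)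
      have "ereal (Jr u w) \<le> ereal (Jr u (w + s *\<^sub>R d))"
        using m unfolding ismin_def using hh_S[OF w] hh_S[OF ws] by metis
      then show "0 \<le> s * Lin u w d + s^2 * Qf d" using J_expand[of u w s d] by simp
    qed
  qed
next
  assume a: "w \<in> S \<and> (\<forall>d\<in>S. Lin u w d = 0)"
  show "ismin u w" unfolding ismin_def
  proof
    fix w'
    show "hh w + ereal ((norm (w - u))^2 / \<gamma>) \<le> hh w' + ereal ((norm (w' - u))^2 / \<gamma>)"
    proof (cases "w' \<in> S")
      case False then show ?thesis using hh_notS by simp
    next
      case True
      then have d: "w' - w \<in> S" using a S by (simp add: subspace_diff)
      have "Jr u w' = Jr u (w + 1 *\<^sub>R (w' - w))" by simp
      also have "\<dots> = Jr u w + Qf (w' - w)" unfolding J_expand using a d by simp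
      finally have "Jr u w \<le> Jr u w'" using Q_nonneg[OF d] by simp
      then show ?thesis using hh_S[of w u] hh_S[OF True, of u] a by simp
    qed
  qed
qed

lemma ismin_unique: "ismin u w1 \<Longrightarrow> ismin u w2 \<Longrightarrow> w1 = w2"
proof -
  assume m1: "ismin u w1" and m2: "ismin u w2"
  then have s1: "w1 \<in> S" and s2: "w2 \<in> S" and l1: "\<forall>d\<in>S. Lin u w1 d = 0" and l2: "\<forall>d\<in>S. Lin u w2 d = 0"
    using ismin_FOC by auto
  define d where "d = w1 - w2"
  have d: "d \<in> S" unfolding d_def using s1 s2 S by (simp add: subspace_diff)
  have "Lin u w1 d - Lin u w2 d = 0" using l1 l2 d by simp
  moreover have "Lin u w1 d - Lin u w2 d = 2 * Qf d"
    unfolding Lin_def Qf_def d_def using \<gamma>pos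
    by (simp add: Mlin inner_diff_left inner_diff_right power2_norm_eq_inner field_simps inner_commute)
  ultimately have "Qf d = 0" by simp
  then have "2 * cc * (norm d)^2 \<le> 0" using Q_lb[OF d] by simp
  then have "norm d = 0" using cc_pos by (smt (verit) mult_pos_pos zero_less_power2 norm_ge_zero)
  then show ?thesis unfolding d_def by simp
qed

lemma ismin_exists: "\<exists>w. ismin u w"
proof -
  define t where "t = (\<lambda>k. inverse (real (Suc k)))"
  have t: "\<And>k. 0 < t k" "t \<longlonglongrightarrow> 0" unfolding t_def using LIMSEQ_inverse_real_of_nat by auto
  define xs where "xs = (\<lambda>k. Pr (y0 + t k *\<^sub>R u))"
  have x: "xs k \<in> prox \<gamma> g (y0 + t k *\<^sub>R (\<lambda>k. u) k)" for k unfolding xs_def by (simp add: Pr_in)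
  define wk where "wk = (\<lambda>k. (xs k - x0) /\<^sub>R t k)"
  have "norm (wk k) \<le> norm u / (\<gamma> * cc)" for k
  proof -
    have "norm (xs k - x0) \<le> norm (y0 + t k *\<^sub>R u - y0) / (\<gamma> * cc)" by (rule calm[OF x[simplified]])
    also have "\<dots> = t k * norm u / (\<gamma> * cc)" using t(1)[of k] by simp
    moreover have "norm (wk k) = norm (xs k - x0) / t k" unfolding wk_def using t(1)[of k]
      by (simp add: divide_inverse_commute)
    ultimately have A: "t k * norm (wk k) = norm (xs k - x0)" and B: "\<gamma> * cc * norm (xs k - x0) \<le> t k * norm u"
      using t(1)[of k] \<gamma>pos cc_pos by (simp_all add: field_simps)
    have "t k * (\<gamma> * cc * norm (wk k)) = \<gamma> * cc * (t k * norm (wk k))" by (simp add: algebra_simps)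
    also have "\<dots> = \<gamma> * cc * norm (xs k - x0)" using A by simp
    also have "\<dots> \<le> t k * norm u" using B .
    finally have "t k * (\<gamma> * cc * norm (wk k)) \<le> t k * norm u" .
    then have "\<gamma> * cc * norm (wk k) \<le> norm u" using t(1)[of k] by simp
    then show ?thesis using \<gamma>pos cc_pos by (simp add: field_simps)
  qed
  then have "bounded (range wk)" unfolding bounded_iff by blast
  then obtain wb and r :: "nat \<Rightarrow> nat" where r: "strict_mono r" "(wk \<circ> r) \<longlonglongrightarrow> wb"
    using bounded_imp_convergent_subsequence by blast
  have "ismin u wb" unfolding ismin_def
  proof
    fix w
    show "hh wb + ereal ((norm (wb - u))^2 / \<gamma>) \<le> hh w + ereal ((norm (w - u))^2 / \<gamma>)"
    proof (rule K4[of "t \<circ> r" "\<lambda>k. u" u "xs \<circ> r"])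
      show "0 < (t \<circ> r) k" for k using t by simp
      show "(t \<circ> r) \<longlonglongrightarrow> 0" using LIMSEQ_subseq_LIMSEQ[OF t(2) r(1)] .
      show "(\<lambda>k. u) \<longlonglongrightarrow> u" by simp
      show "(xs \<circ> r) k \<in> prox \<gamma> g (y0 + (t \<circ> r) k *\<^sub>R u)" for k using x[of "r k"] by simp
      show "(\<lambda>k. ((xs \<circ> r) k - x0) /\<^sub>R (t \<circ> r) k) \<longlonglongrightarrow> wb" using r(2) unfolding wk_def by (simp add: o_def)
    qed
  qed
  then show ?thesis by blast
qed

definition "Dm u = (SOME w. ismin u w)"

lemma Dm_min: "ismin u (Dm u)"
  unfolding Dm_def using ismin_exists by (metis someI_ex)

lemma Dm_eq: "ismin u w \<Longrightarrow> Dm u = w"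
  using Dm_min ismin_unique by blast

lemma Dm_linear: "linear Dm"
proof (rule linearI)
  fix u1 u2
  have a: "Dm u1 \<in> S \<and> (\<forall>d\<in>S. Lin u1 (Dm u1) d = 0)" "Dm u2 \<in> S \<and> (\<forall>d\<in>S. Lin u2 (Dm u2) d = 0)"
    using Dm_min ismin_FOC by blast+
  have "ismin (u1 + u2) (Dm u1 + Dm u2)"
    unfolding ismin_FOC
  proof (intro conjI ballI)
    show "Dm u1 + Dm u2 \<in> S" using a S by (simp add: subspace_add)
    fix d assume d: "d \<in> S"
    have "Lin (u1 + u2) (Dm u1 + Dm u2) d = Lin u1 (Dm u1) d + Lin u2 (Dm u2) d"
      unfolding Lin_def by (simp add: Mlin inner_add_left inner_add_right inner_diff_right add_divide_distrib[symmetric] algebra_simps)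
    then show "Lin (u1 + u2) (Dm u1 + Dm u2) d = 0" using a d by simp
  qed
  then show "Dm (u1 + u2) = Dm u1 + Dm u2" by (rule Dm_eq)
next
  fix c u
  have a: "Dm u \<in> S \<and> (\<forall>d\<in>S. Lin u (Dm u) d = 0)"
    using Dm_min ismin_FOC by blast
  have "ismin (c *\<^sub>R u) (c *\<^sub>R Dm u)"
    unfolding ismin_FOC
  proof (intro conjI ballI)
    show "c *\<^sub>R Dm u \<in> S" using a S by (simp add: subspace_mul)
    fix d assume d: "d \<in> S"
    have "Lin (c *\<^sub>R u) (c *\<^sub>R Dm u) d = c * Lin u (Dm u) d"
      unfolding Lin_def by (simp add: Mlin inner_diff_right algebra_simps)
    then show "Lin (c *\<^sub>R u) (c *\<^sub>R Dm u) d = 0" using a d by simp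
  qed
  then show "Dm (c *\<^sub>R u) = c *\<^sub>R Dm u" by (rule Dm_eq)
qed

end

context gamq begin

lemma Dm_bl: "bounded_linear Dm" using Dm_linear linear_conv_bounded_linear by blast

lemma Pr_deriv: "(Pr has_derivative Dm) (at y0)"
  unfolding has_derivative_at
proof (intro conjI Dm_bl)
  show "((\<lambda>h. norm (Pr (y0 + h) - Pr y0 - Dm h) / norm h) \<longlongrightarrow> 0) (at 0)"
    unfolding tendsto_at_iff_sequentially
  proof (intro allI impI)
    fix hs :: "nat \<Rightarrow> 'a" assume hs: "\<forall>i. hs i \<in> UNIV - {0}" "hs \<longlonglongrightarrow> 0"
    show "((\<lambda>h. norm (Pr (y0 + h) - Pr y0 - Dm h) / norm h) \<circ> hs) \<longlonglongrightarrow> 0"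
    proof (rule subseq_criterion)
      fix r :: "nat \<Rightarrow> nat" assume r: "strict_mono r"
      define t where "t = (\<lambda>k. norm (hs (r k)))"
      define uu where "uu = (\<lambda>k. hs (r k) /\<^sub>R t k)"
      define xs where "xs = (\<lambda>k. Pr (y0 + hs (r k)))"
      define wk where "wk = (\<lambda>k. (xs k - x0) /\<^sub>R t k)"
      have tpos: "0 < t k" for k unfolding t_def using hs(1) by auto
      have hs_eq: "hs (r k) = t k *\<^sub>R uu k" for k unfolding uu_def using tpos[of k] by simp
      have t0: "t \<longlonglongrightarrow> 0" unfolding t_def
        using tendsto_norm[OF LIMSEQ_subseq_LIMSEQ[OF hs(2) r]] by (simp add: o_def)
      have xs_in: "xs k \<in> prox \<gamma> g (y0 + t k *\<^sub>R uu k)" for k unfolding xs_def hs_eq[symmetric] by (rule Pr_in)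
      have nuu: "norm (uu k) = 1" for k unfolding uu_def t_def using hs(1) by simp
      have wb: "norm (wk k) \<le> 1 / (\<gamma> * cc)" for k
      proof -
        have "norm (xs k - x0) \<le> norm (y0 + t k *\<^sub>R uu k - y0) / (\<gamma> * cc)" by (rule calm[OF xs_in])
        also have "\<dots> = t k / (\<gamma> * cc)" using tpos[of k] nuu[of k] by simp
        finally have B: "norm (xs k - x0) \<le> t k / (\<gamma> * cc)" .
        have "norm (wk k) = norm (xs k - x0) / t k" unfolding wk_def using tpos[of k]
          by (simp add: divide_inverse_commute)
        also have "\<dots> \<le> (t k / (\<gamma> * cc)) / t k" by (rule divide_right_mono[OF B]) (use tpos[of k] in simp)
        also have "\<dots> = 1 / (\<gamma> * cc)" using tpos[of k] by simp
        finally show ?thesis .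
      qed
      have "bounded (range (\<lambda>k. (uu k, wk k)))"
      proof (rule bounded_subset[OF bounded_Times])
        show "bounded (range uu)" unfolding bounded_iff using nuu by (metis order_refl rangeE)
        show "bounded (range wk)" unfolding bounded_iff using wb by blast
      qed auto
      then obtain lw and s :: "nat \<Rightarrow> nat" where s: "strict_mono s" "((\<lambda>k. (uu k, wk k)) \<circ> s) \<longlonglongrightarrow> lw"
        using bounded_imp_convergent_subsequence by blast
      define u where "u = fst lw"
      define wb where "wb = snd lw"
      have uus: "(\<lambda>k. uu (s k)) \<longlonglongrightarrow> u" unfolding u_def using tendsto_fst[OF s(2)] by (simp add: o_def)
      have wks: "(\<lambda>k. wk (s k)) \<longlonglongrightarrow> wb" unfolding wb_def using tendsto_snd[OF s(2)] by (simp add: o_def)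
      have "ismin u wb" unfolding ismin_def
      proof
        fix w
        show "hh wb + ereal ((norm (wb - u))^2 / \<gamma>) \<le> hh w + ereal ((norm (w - u))^2 / \<gamma>)"
        proof (rule K4[of "t \<circ> s" "uu \<circ> s" u "xs \<circ> s"])
          show "0 < (t \<circ> s) k" for k using tpos by simp
          show "(t \<circ> s) \<longlonglongrightarrow> 0" using LIMSEQ_subseq_LIMSEQ[OF t0 s(1)] .
          show "(uu \<circ> s) \<longlonglongrightarrow> u" using uus by (simp add: o_def)
          show "(xs \<circ> s) k \<in> prox \<gamma> g (y0 + (t \<circ> s) k *\<^sub>R (uu \<circ> s) k)" for k using xs_in[of "s k"] by simp
          show "(\<lambda>k. ((xs \<circ> s) k - x0) /\<^sub>R (t \<circ> s) k) \<longlonglongrightarrow> wb" using wks unfolding wk_def by (simp add: o_def)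
        qed
      qed
      then have wbD: "wb = Dm u" using Dm_eq by simp
      have q: "((\<lambda>h. norm (Pr (y0 + h) - Pr y0 - Dm h) / norm h) \<circ> hs) (r k) = norm (wk k - Dm (uu k))" for k
      proof -
        have "Pr (y0 + hs (r k)) - Pr y0 - Dm (hs (r k)) = t k *\<^sub>R (wk k - Dm (uu k))"
          unfolding wk_def xs_def Pr_y0 hs_eq using tpos[of k] Dm_linear
          by (simp add: linear_scale scaleR_diff_right)
        then show ?thesis using tpos[of k] unfolding t_def by simp
      qed
      have "(\<lambda>k. norm (wk (s k) - Dm (uu (s k)))) \<longlonglongrightarrow> norm (wb - Dm u)"
        by (intro tendsto_intros wks bounded_linear.tendsto[OF Dm_bl uus])
      then have "(\<lambda>k. norm (wk (s k) - Dm (uu (s k)))) \<longlonglongrightarrow> 0" using wbD by simp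
      then show "\<exists>s. strict_mono s \<and> (\<lambda>n. ((\<lambda>h. norm (Pr (y0 + h) - Pr y0 - Dm h) / norm h) \<circ> hs) (r (s n))) \<longlonglongrightarrow> 0"
        using s(1) q by auto
    qed
  qed
qed

end

context gam begin

definition "gr z = real_of_ereal (g z)"

lemma prox_real:
  assumes x: "x \<in> prox \<gamma> g y" and z: "g z \<noteq> \<infinity>"
  shows "gr x + (norm (x - y))^2 / (2*\<gamma>) \<le> gr z + (norm (z - y))^2 / (2*\<gamma>)"
proof -
  have gz: "g z = ereal (gr z)" unfolding gr_def using z g_nm[of z] by (cases "g z") auto
  have gx: "g x = ereal (gr x)" unfolding gr_def using prox_fin[OF x] .
  have "Phi y x \<le> Phi y z" using x prox_iff by blast
  then show ?thesis unfolding Phi_def gx gz by simp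
qed

lemma subgrad:
  assumes x: "x \<in> prox \<gamma> g y"
  shows "(y - x) /\<^sub>R \<gamma> \<in> limiting_subdiff g x"
proof -
  define v where "v = (y - x) /\<^sub>R \<gamma>"
  have gx: "g x = ereal (gr x)" unfolding gr_def using prox_fin[OF x] .
  have fin: "\<bar>g x\<bar> \<noteq> \<infinity>" using gx by simp
  have fr: "v \<in> frechet_subdiff g x"
    unfolding frechet_subdiff_def
  proof (intro CollectI conjI fin allI impI)
    fix e :: real assume e: "0 < e"
    show "\<exists>d>0. \<forall>z. norm (z - x) < d \<longrightarrow> g x + ereal (v \<bullet> (z - x) - e * norm (z - x)) \<le> g z"
    proof (intro exI conjI allI impI)
      show "0 < 2 * \<gamma> * e" using e \<gamma>pos by simp
      fix z assume zd: "norm (z - x) < 2 * \<gamma> * e"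
      show "g x + ereal (v \<bullet> (z - x) - e * norm (z - x)) \<le> g z"
      proof (cases "g z = \<infinity>")
        case True then show ?thesis by simp
      next
        case False
        have gz: "g z = ereal (gr z)" unfolding gr_def using False g_nm[of z] by (cases "g z") auto
        have pr: "gr x + (norm (x - y))^2 / (2*\<gamma>) \<le> gr z + (norm (z - y))^2 / (2*\<gamma>)"
          by (rule prox_real[OF x False])
        have e1: "z - y = (z - x) + (x - y)" by simp
        have n: "(norm (z - y))^2 = (norm (z - x))^2 + 2 * ((z - x) \<bullet> (x - y)) + (norm (x - y))^2"
          by (subst e1, rule nsq_add)
        have vz: "v \<bullet> (z - x) = - ((z - x) \<bullet> (x - y)) / \<gamma>"
          unfolding v_def using \<gamma>pos by (simp add: inner_commute inner_diff_right inner_diff_left field_simps)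
        have "(norm (z - x))^2 / (2*\<gamma>) \<le> e * norm (z - x)"
        proof -
          have "(norm (z - x))^2 = norm (z - x) * norm (z - x)" by (simp add: power2_eq_square)
          also have "\<dots> \<le> norm (z - x) * (2 * \<gamma> * e)" using zd by (intro mult_left_mono) auto
          finally show ?thesis using \<gamma>pos by (simp add: field_simps)
        qed
        moreover have "((norm (z - x))^2 + 2 * ((z - x) \<bullet> (x - y)) + (norm (x - y))^2) / (2*\<gamma>)
           = (norm (z - x))^2 / (2*\<gamma>) + ((z - x) \<bullet> (x - y)) / \<gamma> + (norm (x - y))^2 / (2*\<gamma>)"
          using \<gamma>pos by (simp add: field_simps)
        ultimately have "gr x + v \<bullet> (z - x) - e * norm (z - x) \<le> gr z"
          using pr unfolding n vz by simp
        then show ?thesis unfolding gx gz by simp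
      qed
    qed
  qed
  show ?thesis unfolding limiting_subdiff_def v_def[symmetric]
    by (intro CollectI conjI fin exI[of _ "\<lambda>k. x"] exI[of _ "\<lambda>k. v"]) (use fr in auto)
qed

end

locale gamr = gamq +
  fixes r \<epsilon> :: real
  assumes r: "0 \<le> r" and \<epsilon>: "0 < \<epsilon>" and r\<gamma>: "r * \<gamma> < 1"
    and preg: "\<And>x' x v. x' \<in> cball x0 \<epsilon> \<Longrightarrow> v \<in> limiting_subdiff g x \<Longrightarrow> norm (x - x0) < \<epsilon> \<Longrightarrow>
       norm (v - v0) < \<epsilon> \<Longrightarrow> g x \<le> g x0 + ereal \<epsilon> \<Longrightarrow>
       g x + ereal (v \<bullet> (x' - x) - r / 2 * (norm (x' - x))^2) \<le> g x'"
begin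

definition "kap = 1 / (\<gamma> * cc)"

lemma kap_pos: "0 < kap" unfolding kap_def using \<gamma>pos cc_pos by simp

lemma calm': "x \<in> prox \<gamma> g y \<Longrightarrow> norm (x - x0) \<le> kap * norm (y - y0)"
  using calm unfolding kap_def by simp

lemma small_delta:
  "\<exists>\<delta>>0. \<forall>\<rho>. 0 \<le> \<rho> \<and> \<rho> < \<delta> \<longrightarrow> kap * \<rho> < \<epsilon> \<and> (\<rho> + kap * \<rho>) / \<gamma> < \<epsilon> \<and>
      kap * \<rho> * (\<gamma> * norm v0 + \<rho>) / \<gamma> < \<epsilon>"
proof -
  have id: "((\<lambda>\<rho>::real. \<rho>) \<longlongrightarrow> 0) (nhds 0)" unfolding tendsto_def eventually_nhds by blast
  have t1': "((\<lambda>\<rho>::real. kap * \<rho>) \<longlongrightarrow> kap * 0) (nhds 0)" using \<gamma>pos by (intro tendsto_intros id; simp)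
  have t2': "((\<lambda>\<rho>::real. (\<rho> + kap * \<rho>) / \<gamma>) \<longlongrightarrow> (0 + kap * 0) / \<gamma>) (nhds 0)" using \<gamma>pos by (intro tendsto_intros id; simp)
  have t3': "((\<lambda>\<rho>::real. kap * \<rho> * (\<gamma> * norm v0 + \<rho>) / \<gamma>) \<longlongrightarrow> kap * 0 * (\<gamma> * norm v0 + 0) / \<gamma>) (nhds 0)"
    using \<gamma>pos by (intro tendsto_intros id; simp)
  have t1: "((\<lambda>\<rho>::real. kap * \<rho>) \<longlongrightarrow> 0) (nhds 0)" using t1' by simp
  have t2: "((\<lambda>\<rho>::real. (\<rho> + kap * \<rho>) / \<gamma>) \<longlongrightarrow> 0) (nhds 0)" using t2' by simp
  have t3: "((\<lambda>\<rho>::real. kap * \<rho> * (\<gamma> * norm v0 + \<rho>) / \<gamma>) \<longlongrightarrow> 0) (nhds 0)" using t3' by simp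
  have "eventually (\<lambda>\<rho>. kap * \<rho> < \<epsilon> \<and> (\<rho> + kap * \<rho>) / \<gamma> < \<epsilon> \<and> kap * \<rho> * (\<gamma> * norm v0 + \<rho>) / \<gamma> < \<epsilon>) (nhds (0::real))"
    using order_tendstoD(2)[OF t1 \<epsilon>] order_tendstoD(2)[OF t2 \<epsilon>] order_tendstoD(2)[OF t3 \<epsilon>]
    by (intro eventually_conj)
  then obtain d where "d > 0" "\<And>\<rho>. dist \<rho> 0 < d \<Longrightarrow> kap * \<rho> < \<epsilon> \<and> (\<rho> + kap * \<rho>) / \<gamma> < \<epsilon> \<and> kap * \<rho> * (\<gamma> * norm v0 + \<rho>) / \<gamma> < \<epsilon>"
    unfolding eventually_nhds_metric by blast
  then show ?thesis by (intro exI[of _ d]) auto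
qed

end

context gamr begin

definition "del = (SOME \<delta>. \<delta> > 0 \<and> (\<forall>\<rho>. 0 \<le> \<rho> \<and> \<rho> < \<delta> \<longrightarrow> kap * \<rho> < \<epsilon> \<and> (\<rho> + kap * \<rho>) / \<gamma> < \<epsilon> \<and>
      kap * \<rho> * (\<gamma> * norm v0 + \<rho>) / \<gamma> < \<epsilon>))"

lemma del: "del > 0" "\<And>\<rho>. 0 \<le> \<rho> \<Longrightarrow> \<rho> < del \<Longrightarrow> kap * \<rho> < \<epsilon> \<and> (\<rho> + kap * \<rho>) / \<gamma> < \<epsilon> \<and>
      kap * \<rho> * (\<gamma> * norm v0 + \<rho>) / \<gamma> < \<epsilon>"
  using someI_ex[OF small_delta] unfolding del_def by blast+

lemma gx_fin: "x \<in> prox \<gamma> g y \<Longrightarrow> g x = ereal (gr x)"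
  unfolding gr_def by (rule prox_fin)

lemma cond:
  assumes y: "norm (y - y0) < del" and x: "x \<in> prox \<gamma> g y"
  shows "(y - x) /\<^sub>R \<gamma> \<in> limiting_subdiff g x" "norm (x - x0) < \<epsilon>"
    "norm ((y - x) /\<^sub>R \<gamma> - v0) < \<epsilon>" "g x \<le> g x0 + ereal \<epsilon>"
proof -
  define \<rho> where "\<rho> = norm (y - y0)"
  have d: "kap * \<rho> < \<epsilon>" "(\<rho> + kap * \<rho>) / \<gamma> < \<epsilon>" "kap * \<rho> * (\<gamma> * norm v0 + \<rho>) / \<gamma> < \<epsilon>"
    using del(2)[of \<rho>] y unfolding \<rho>_def by auto
  have cx: "norm (x - x0) \<le> kap * \<rho>" unfolding \<rho>_def by (rule calm'[OF x])
  show "(y - x) /\<^sub>R \<gamma> \<in> limiting_subdiff g x" by (rule subgrad[OF x])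
  show "norm (x - x0) < \<epsilon>" using cx d by simp
  have "(y - x) /\<^sub>R \<gamma> - v0 = ((y - y0) - (x - x0)) /\<^sub>R \<gamma>"
    unfolding y0_def using \<gamma>pos by (simp add: algebra_simps)
  then have "norm ((y - x) /\<^sub>R \<gamma> - v0) = norm ((y - y0) - (x - x0)) / \<gamma>"
    using \<gamma>pos by (simp add: divide_inverse_commute)
  also have "\<dots> \<le> (\<rho> + kap * \<rho>) / \<gamma>"
    using norm_triangle_ineq4[of "y - y0" "x - x0"] cx \<gamma>pos unfolding \<rho>_def
    by (intro divide_right_mono) auto
  finally show "norm ((y - x) /\<^sub>R \<gamma> - v0) < \<epsilon>" using d by simp
  have pr: "gr x + (norm (x - y))^2 / (2*\<gamma>) \<le> gr x0 + (norm (x0 - y))^2 / (2*\<gamma>)"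
    by (rule prox_real[OF x]) (simp add: g0)
  have e1: "x - y = (x - x0) + (x0 - y)" by simp
  have n: "(norm (x - y))^2 = (norm (x - x0))^2 + 2 * ((x - x0) \<bullet> (x0 - y)) + (norm (x0 - y))^2"
    by (subst e1, rule nsq_add)
  have x0y: "norm (x0 - y) \<le> \<gamma> * norm v0 + \<rho>"
  proof -
    have "x0 - y = - (\<gamma> *\<^sub>R v0) - (y - y0)" unfolding y0_def by simp
    then have "norm (x0 - y) \<le> norm (\<gamma> *\<^sub>R v0) + norm (y - y0)"
      by (metis norm_minus_cancel norm_triangle_ineq4)
    then show ?thesis unfolding \<rho>_def using \<gamma>pos by simp
  qed
  have "- ((x - x0) \<bullet> (x0 - y)) \<le> norm (x - x0) * norm (x0 - y)"
    using norm_cauchy_schwarz[of "x - x0" "-(x0 - y)"] by (simp add: inner_diff_right norm_minus_commute)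
  also have "\<dots> \<le> (kap * \<rho>) * (\<gamma> * norm v0 + \<rho>)"
    using cx x0y kap_pos unfolding \<rho>_def by (intro mult_mono) auto
  finally have cs: "- ((x - x0) \<bullet> (x0 - y)) \<le> kap * \<rho> * (\<gamma> * norm v0 + \<rho>)" .
  have "gr x \<le> gr x0 + ((norm (x0 - y))^2 - (norm (x - y))^2) / (2*\<gamma>)"
    using pr by (simp add: diff_divide_distrib)
  also have "((norm (x0 - y))^2 - (norm (x - y))^2) = - ((norm (x - x0))^2) - 2 * ((x - x0) \<bullet> (x0 - y))"
    unfolding n by simp
  also have "- ((norm (x - x0))^2) - 2 * ((x - x0) \<bullet> (x0 - y)) \<le> 2 * (kap * \<rho> * (\<gamma> * norm v0 + \<rho>))"
    using cs by (smt (verit) zero_le_power2)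
  finally have "gr x \<le> gr x0 + kap * \<rho> * (\<gamma> * norm v0 + \<rho>) / \<gamma>"
    using \<gamma>pos by (simp add: divide_right_mono)
  then have "gr x \<le> g0 + \<epsilon>" using d(3) g0 unfolding gr_def by simp
  then show "g x \<le> g x0 + ereal \<epsilon>" using gx_fin[OF x] g0 by simp
qed

lemma loc_lip:
  assumes y1: "norm (y1 - y0) < del" and y2: "norm (y2 - y0) < del"
    and x1: "x1 \<in> prox \<gamma> g y1" and x2: "x2 \<in> prox \<gamma> g y2"
  shows "(1 - r * \<gamma>) * norm (x1 - x2) \<le> norm (y1 - y2)"
proof -
  define v1 where "v1 = (y1 - x1) /\<^sub>R \<gamma>"
  define v2 where "v2 = (y2 - x2) /\<^sub>R \<gamma>"
  note c1 = cond[OF y1 x1, folded v1_def] and c2 = cond[OF y2 x2, folded v2_def]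
  have x2c: "x2 \<in> cball x0 \<epsilon>" using c2(2) by (simp add: dist_norm norm_minus_commute)
  have x1c: "x1 \<in> cball x0 \<epsilon>" using c1(2) by (simp add: dist_norm norm_minus_commute)
  have a: "g x1 + ereal (v1 \<bullet> (x2 - x1) - r / 2 * (norm (x2 - x1))^2) \<le> g x2"
    by (rule preg[OF x2c c1(1) c1(2) c1(3) c1(4)])
  have b: "g x2 + ereal (v2 \<bullet> (x1 - x2) - r / 2 * (norm (x1 - x2))^2) \<le> g x1"
    by (rule preg[OF x1c c2(1) c2(2) c2(3) c2(4)])
  have a': "gr x1 + (v1 \<bullet> (x2 - x1) - r / 2 * (norm (x2 - x1))^2) \<le> gr x2"
    using a unfolding gx_fin[OF x1] gx_fin[OF x2] by simp
  have b': "gr x2 + (v2 \<bullet> (x1 - x2) - r / 2 * (norm (x1 - x2))^2) \<le> gr x1"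
    using b unfolding gx_fin[OF x1] gx_fin[OF x2] by simp
  have "v1 \<bullet> (x2 - x1) + v2 \<bullet> (x1 - x2) \<le> r * (norm (x1 - x2))^2"
    using a' b' by (simp add: norm_minus_commute)
  moreover have "v1 \<bullet> (x2 - x1) + v2 \<bullet> (x1 - x2) = ((norm (x1 - x2))^2 - (y1 - y2) \<bullet> (x1 - x2)) / \<gamma>"
    unfolding v1_def v2_def using \<gamma>pos
    by (simp add: power2_norm_eq_inner inner_diff_left inner_diff_right inner_commute field_simps)
  ultimately have "(norm (x1 - x2))^2 - (y1 - y2) \<bullet> (x1 - x2) \<le> r * \<gamma> * (norm (x1 - x2))^2"
    using \<gamma>pos by (simp add: field_simps)
  then have "(1 - r * \<gamma>) * (norm (x1 - x2))^2 \<le> (y1 - y2) \<bullet> (x1 - x2)"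
    by (simp add: algebra_simps)
  also have "\<dots> \<le> norm (y1 - y2) * norm (x1 - x2)" by (rule norm_cauchy_schwarz)
  finally have "((1 - r * \<gamma>) * norm (x1 - x2)) * norm (x1 - x2) \<le> norm (y1 - y2) * norm (x1 - x2)"
    by (simp add: power2_eq_square algebra_simps)
  then show ?thesis
    by (cases "norm (x1 - x2) = 0") (use r\<gamma> in \<open>auto simp: mult_le_cancel_right\<close>)
qed

end

context gamr begin

definition "er y = gr (Pr y) + (norm (Pr y - y))^2 / (2*\<gamma>)"
definition "Lp = 1 / (1 - r * \<gamma>)"

lemma Lp_pos: "0 < Lp" unfolding Lp_def using r\<gamma> by simp

lemma Pr_lip: "norm (y1 - y0) < del \<Longrightarrow> norm (y2 - y0) < del \<Longrightarrow> norm (Pr y1 - Pr y2) \<le> Lp * norm (y1 - y2)"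
  using loc_lip[OF _ _ Pr_in Pr_in, of y1 y2] r\<gamma> unfolding Lp_def by (simp add: field_simps)

lemma er_upper: "er y' - er y \<le> ((y - Pr y) /\<^sub>R \<gamma>) \<bullet> (y' - y) + (norm (y' - y))^2 / (2*\<gamma>)"
proof -
  have gfin: "g (Pr y) \<noteq> \<infinity>" using gx_fin[OF Pr_in[of y]] by simp
  have pr: "gr (Pr y') + (norm (Pr y' - y'))^2 / (2*\<gamma>) \<le> gr (Pr y) + (norm (Pr y - y'))^2 / (2*\<gamma>)"
    by (rule prox_real[OF Pr_in gfin])
  have e: "Pr y - y' = (Pr y - y) - (y' - y)" by simp
  have n: "(norm (Pr y - y'))^2 = (norm (Pr y - y))^2 - 2 * ((Pr y - y) \<bullet> (y' - y)) + (norm (y' - y))^2"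
    by (subst e, rule nsq_diff)
  have "((y - Pr y) /\<^sub>R \<gamma>) \<bullet> (y' - y) = - ((Pr y - y) \<bullet> (y' - y)) / \<gamma>"
    using \<gamma>pos by (simp add: inner_diff_left field_simps)
  moreover have "((norm (Pr y - y))^2 - 2 * ((Pr y - y) \<bullet> (y' - y)) + (norm (y' - y))^2) / (2*\<gamma>)
     = (norm (Pr y - y))^2 / (2*\<gamma>) - ((Pr y - y) \<bullet> (y' - y)) / \<gamma> + (norm (y' - y))^2 / (2*\<gamma>)"
    using \<gamma>pos by (simp add: field_simps)
  ultimately show ?thesis using pr unfolding er_def n by simp
qed

lemma er_lower:
  assumes y: "norm (y - y0) < del" and y': "norm (y' - y0) < del"
  shows "((y - Pr y) /\<^sub>R \<gamma>) \<bullet> (y' - y) - Lp / \<gamma> * (norm (y' - y))^2 \<le> er y' - er y"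
proof -
  have gfin: "g (Pr y') \<noteq> \<infinity>" using gx_fin[OF Pr_in[of y']] by simp
  have pr: "gr (Pr y) + (norm (Pr y - y))^2 / (2*\<gamma>) \<le> gr (Pr y') + (norm (Pr y' - y))^2 / (2*\<gamma>)"
    by (rule prox_real[OF Pr_in gfin])
  have e: "Pr y' - y = (Pr y' - y') + (y' - y)" by simp
  have n: "(norm (Pr y' - y))^2 = (norm (Pr y' - y'))^2 + 2 * ((Pr y' - y') \<bullet> (y' - y)) + (norm (y' - y))^2"
    by (subst e, rule nsq_add)
  have "((norm (Pr y' - y'))^2 + 2 * ((Pr y' - y') \<bullet> (y' - y)) + (norm (y' - y))^2) / (2*\<gamma>)
     = (norm (Pr y' - y'))^2 / (2*\<gamma>) + ((Pr y' - y') \<bullet> (y' - y)) / \<gamma> + (norm (y' - y))^2 / (2*\<gamma>)"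
    using \<gamma>pos by (simp add: field_simps)
  then have A: "- ((Pr y' - y') \<bullet> (y' - y)) / \<gamma> - (norm (y' - y))^2 / (2*\<gamma>) \<le> er y' - er y"
    using pr unfolding er_def n by simp
  have e2: "y' - Pr y' = (y - Pr y) + (y' - y) - (Pr y' - Pr y)" by simp
  have B: "- ((Pr y' - y') \<bullet> (y' - y)) = (y - Pr y) \<bullet> (y' - y) + (norm (y' - y))^2 - (Pr y' - Pr y) \<bullet> (y' - y)"
  proof -
    have "- ((Pr y' - y') \<bullet> (y' - y)) = (y' - Pr y') \<bullet> (y' - y)" by (simp add: inner_diff_left)
    also have "\<dots> = (y - Pr y) \<bullet> (y' - y) + (y' - y) \<bullet> (y' - y) - (Pr y' - Pr y) \<bullet> (y' - y)"
      by (subst e2) (simp only: inner_diff_left inner_add_left)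
    finally show ?thesis by (simp add: power2_norm_eq_inner)
  qed
  have C: "(Pr y' - Pr y) \<bullet> (y' - y) \<le> Lp * (norm (y' - y))^2"
  proof -
    have "(Pr y' - Pr y) \<bullet> (y' - y) \<le> norm (Pr y' - Pr y) * norm (y' - y)" by (rule norm_cauchy_schwarz)
    also have "\<dots> \<le> (Lp * norm (y' - y)) * norm (y' - y)"
      by (intro mult_right_mono Pr_lip y y') simp
    finally show ?thesis by (simp add: power2_eq_square algebra_simps)
  qed
  have D: "((y - Pr y) /\<^sub>R \<gamma>) \<bullet> (y' - y) = ((y - Pr y) \<bullet> (y' - y)) / \<gamma>"
    unfolding inner_scaleR_left by (simp add: divide_inverse mult.commute)
  have "((y - Pr y) \<bullet> (y' - y)) / \<gamma> - Lp / \<gamma> * (norm (y' - y))^2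
     \<le> - ((Pr y' - y') \<bullet> (y' - y)) / \<gamma> - (norm (y' - y))^2 / (2*\<gamma>)"
  proof -
    have "((y - Pr y) \<bullet> (y' - y)) - Lp * (norm (y' - y))^2
       \<le> - ((Pr y' - y') \<bullet> (y' - y)) - (norm (y' - y))^2 / 2"
      unfolding B using C zero_le_power2[of "norm (y' - y)"] by linarith
    then have "(((y - Pr y) \<bullet> (y' - y)) - Lp * (norm (y' - y))^2) / \<gamma>
       \<le> (- ((Pr y' - y') \<bullet> (y' - y)) - (norm (y' - y))^2 / 2) / \<gamma>"
      using \<gamma>pos by (simp add: divide_right_mono)
    moreover have "(((y - Pr y) \<bullet> (y' - y)) - Lp * (norm (y' - y))^2) / \<gamma>
       = ((y - Pr y) \<bullet> (y' - y)) / \<gamma> - Lp / \<gamma> * (norm (y' - y))^2"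
      by (simp add: diff_divide_distrib)
    moreover have "(- ((Pr y' - y') \<bullet> (y' - y)) - (norm (y' - y))^2 / 2) / \<gamma>
       = - ((Pr y' - y') \<bullet> (y' - y)) / \<gamma> - (norm (y' - y))^2 / (2*\<gamma>)"
      by (simp add: diff_divide_distrib)
    ultimately show ?thesis by simp
  qed
  then show ?thesis using A D by simp
qed

lemma er_deriv:
  assumes y: "norm (y - y0) < del"
  shows "GDERIV er y :> (y - Pr y) /\<^sub>R \<gamma>"
  unfolding gderiv_def has_derivative_at_alt
proof (intro conjI allI impI bounded_linear_inner_left)
  fix e :: real assume e: "0 < e"
  define C where "C = (1/2 + Lp) / \<gamma>"
  have Cpos: "0 < C" unfolding C_def using Lp_pos \<gamma>pos by simp
  show "\<exists>d>0. \<forall>y'. norm (y' - y) < d \<longrightarrow> norm (er y' - er y - (y' - y) \<bullet> ((y - Pr y) /\<^sub>R \<gamma>)) \<le> e * norm (y' - y)"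
  proof (intro exI conjI allI impI)
    show "0 < min (del - norm (y - y0)) (e / C)" using y e Cpos by simp
    fix y' assume y': "norm (y' - y) < min (del - norm (y - y0)) (e / C)"
    have y'b: "norm (y' - y0) < del"
      using y' norm_triangle_ineq[of "y' - y" "y - y0"] by simp
    have u: "er y' - er y - (y' - y) \<bullet> ((y - Pr y) /\<^sub>R \<gamma>) \<le> (norm (y' - y))^2 / (2*\<gamma>)"
      using er_upper[of y' y] by (simp add: inner_commute)
    have l: "- (Lp / \<gamma> * (norm (y' - y))^2) \<le> er y' - er y - (y' - y) \<bullet> ((y - Pr y) /\<^sub>R \<gamma>)"
      using er_lower[OF y y'b] by (simp add: inner_commute)
    have "(norm (y' - y))^2 / (2*\<gamma>) \<le> C * (norm (y' - y))^2" "Lp / \<gamma> * (norm (y' - y))^2 \<le> C * (norm (y' - y))^2"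
      unfolding C_def using \<gamma>pos Lp_pos by (simp_all add: field_simps)
    then have "norm (er y' - er y - (y' - y) \<bullet> ((y - Pr y) /\<^sub>R \<gamma>)) \<le> C * (norm (y' - y))^2"
      using u l by (simp add: abs_le_iff)
    also have "\<dots> = (C * norm (y' - y)) * norm (y' - y)" by (simp add: power2_eq_square)
    also have "\<dots> \<le> e * norm (y' - y)"
    proof (intro mult_right_mono)
      have "C * norm (y' - y) \<le> C * (e / C)" using y' Cpos by (intro mult_left_mono) auto
      then show "C * norm (y' - y) \<le> e" using Cpos by simp
    qed simp
    finally show "norm (er y' - er y - (y' - y) \<bullet> ((y - Pr y) /\<^sub>R \<gamma>)) \<le> e * norm (y' - y)" .
  qed
qed

end

context gamr begin

definition "Tm x = Pr (x - \<gamma> *\<^sub>R f' x)"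
definition "Fr x = f x - \<gamma> / 2 * (norm (f' x))^2 + er (x - \<gamma> *\<^sub>R f' x)"

lemma Phi_Pr: "Phi y (Pr y) = ereal (er y)"
  unfolding Phi_def er_def gx_fin[OF Pr_in] by simp

lemma fbe_term:
  "ereal (f x + f' x \<bullet> (u - x)) + g u + ereal ((norm (u - x))^2 / (2*\<gamma>))
   = ereal (f x - \<gamma> / 2 * (norm (f' x))^2) + Phi (x - \<gamma> *\<^sub>R f' x) u"
proof -
  have e: "u - (x - \<gamma> *\<^sub>R f' x) = (u - x) + \<gamma> *\<^sub>R f' x" by simp
  have n: "(norm (u - (x - \<gamma> *\<^sub>R f' x)))^2 = (norm (u - x))^2 + 2 * \<gamma> * ((u - x) \<bullet> f' x) + \<gamma>^2 * (norm (f' x))^2"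
    unfolding e nsq_add[of "u - x" "\<gamma> *\<^sub>R f' x"] by (simp add: power_mult_distrib)
  have r: "f x + f' x \<bullet> (u - x) + (norm (u - x))^2 / (2*\<gamma>)
     = f x - \<gamma> / 2 * (norm (f' x))^2 + (norm (u - (x - \<gamma> *\<^sub>R f' x)))^2 / (2*\<gamma>)"
    unfolding n using \<gamma>pos by (simp add: field_simps power2_eq_square inner_commute)
  show ?thesis
  proof (cases "g u")
    case (real c) then show ?thesis unfolding Phi_def using r by simp
  next
    case PInf then show ?thesis unfolding Phi_def by simp
  next
    case MInf then show ?thesis using g_nm[of u] by simp
  qed
qed

lemma fbe_eq: "fbe f f' g \<gamma> x = ereal (Fr x)"
proof -
  define y where "y = x - \<gamma> *\<^sub>R f' x"
  define c where "c = f x - \<gamma> / 2 * (norm (f' x))^2"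
  have "fbe f f' g \<gamma> x = (INF u. ereal c + Phi y u)"
    unfolding fbe_def fbe_term y_def c_def ..
  also have "\<dots> = ereal c + Phi y (Pr y)"
  proof (rule antisym)
    show "(INF u. ereal c + Phi y u) \<le> ereal c + Phi y (Pr y)" by (rule INF_lower) simp
    show "ereal c + Phi y (Pr y) \<le> (INF u. ereal c + Phi y u)"
      using Pr_in[of y] prox_iff by (auto intro!: INF_greatest add_left_mono)
  qed
  also have "\<dots> = ereal (Fr x)" unfolding Phi_Pr Fr_def c_def y_def by simp
  finally show ?thesis .
qed

lemma inner_basis_sum:
  assumes "linear B"
  shows "B h \<bullet> z = (\<Sum>i\<in>Basis. (h \<bullet> i) * (B i \<bullet> z))"
proof -
  have "B h = B (\<Sum>i\<in>Basis. (h \<bullet> i) *\<^sub>R i)" by (simp add: euclidean_representation)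
  also have "\<dots> = (\<Sum>i\<in>Basis. (h \<bullet> i) *\<^sub>R B i)" using assms by (simp add: linear_sum linear_scale)
  finally show ?thesis by (simp add: inner_sum_left)
qed

end

locale gamh = gamr +
  fixes \<epsilon>H :: real and A :: "'a \<Rightarrow> ('a \<Rightarrow>\<^sub>L 'a)"
  assumes \<epsilon>H: "0 < \<epsilon>H"
    and hessd: "\<And>x. x \<in> ball x0 \<epsilon>H \<Longrightarrow> (f' has_derivative blinfun_apply (A x)) (at x)"
    and hessc: "continuous_on (ball x0 \<epsilon>H) A"
begin

definition "Um x = (x - Tm x) /\<^sub>R \<gamma>"
definition "Gm x = Um x - \<gamma> *\<^sub>R (\<Sum>i\<in>Basis. (A x i \<bullet> Um x) *\<^sub>R i)"
definition "rho = min \<epsilon>H (del / (1 + \<gamma> * L))"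

lemma rho_pos: "0 < rho"
proof -
  have "0 < 1 + \<gamma> * L" using \<gamma>pos L_nonneg by (simp add: add_pos_nonneg)
  then show ?thesis unfolding rho_def using \<epsilon>H del(1) by simp
qed

lemma y_in: assumes "norm (x - x0) < rho" shows "norm (x - \<gamma> *\<^sub>R f' x - y0) < del"
proof -
  have "x - \<gamma> *\<^sub>R f' x - y0 = (x - x0) - \<gamma> *\<^sub>R (f' x - f' x0)" unfolding y0_def using v0 by (simp add: algebra_simps)
  then have "norm (x - \<gamma> *\<^sub>R f' x - y0) = norm ((x - x0) - \<gamma> *\<^sub>R (f' x - f' x0))" by metis
  also have "\<dots> \<le> norm (x - x0) + \<gamma> * norm (f' x - f' x0)"
    using norm_triangle_ineq4[of "x - x0" "\<gamma> *\<^sub>R (f' x - f' x0)"] \<gamma>pos by simp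
  finally have "norm (x - \<gamma> *\<^sub>R f' x - y0) \<le> norm (x - x0) + \<gamma> * norm (f' x - f' x0)" .
  also have "\<dots> \<le> norm (x - x0) + \<gamma> * (L * norm (x - x0))"
    using f'_lip \<gamma>pos by (intro add_left_mono mult_left_mono) auto
  also have "\<dots> = (1 + \<gamma> * L) * norm (x - x0)" by (simp add: algebra_simps)
  also have "\<dots> < (1 + \<gamma> * L) * (del / (1 + \<gamma> * L))"
    using assms \<gamma>pos L_nonneg unfolding rho_def by (intro mult_strict_left_mono) (auto simp: add_pos_nonneg)
  also have "\<dots> = del"
  proof -
    have "0 < 1 + \<gamma> * L" using \<gamma>pos L_nonneg by (simp add: add_pos_nonneg)
    then show ?thesis by simp
  qed
  finally show ?thesis .
qed

lemma Fr_deriv: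
  assumes x: "norm (x - x0) < rho"
  shows "GDERIV Fr x :> Gm x"
proof -
  have xb: "x \<in> ball x0 \<epsilon>H" using x unfolding rho_def by (simp add: dist_norm norm_minus_commute)
  define y where "y = x - \<gamma> *\<^sub>R f' x"
  define p where "p = (y - Pr y) /\<^sub>R \<gamma>"
  have yb: "norm (y - y0) < del" unfolding y_def by (rule y_in[OF x])
  have d1: "(f has_derivative (\<lambda>h. h \<bullet> f' x)) (at x)" using grad[of x] unfolding gderiv_def .
  have d2: "((\<lambda>x. f' x \<bullet> f' x) has_derivative (\<lambda>h. f' x \<bullet> A x h + A x h \<bullet> f' x)) (at x)"
    by (rule has_derivative_inner[OF hessd[OF xb] hessd[OF xb]])
  have dy: "((\<lambda>x. x - \<gamma> *\<^sub>R f' x) has_derivative (\<lambda>h. h - \<gamma> *\<^sub>R A x h)) (at x)"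
    by (intro derivative_intros hessd[OF xb])
  have de: "(er has_derivative (\<lambda>k. k \<bullet> p)) (at (x - \<gamma> *\<^sub>R f' x))"
    using er_deriv[OF yb] unfolding gderiv_def p_def y_def .
  have d3: "((\<lambda>x. er (x - \<gamma> *\<^sub>R f' x)) has_derivative (\<lambda>h. (h - \<gamma> *\<^sub>R A x h) \<bullet> p)) (at x)"
    by (rule has_derivative_compose[OF dy de])
  have "((\<lambda>x. f x - \<gamma> / 2 * (f' x \<bullet> f' x) + er (x - \<gamma> *\<^sub>R f' x)) has_derivative
      (\<lambda>h. h \<bullet> f' x - \<gamma> / 2 * (f' x \<bullet> A x h + A x h \<bullet> f' x) + (h - \<gamma> *\<^sub>R A x h) \<bullet> p)) (at x)"
    by (intro derivative_intros d1 d2 d3)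
  moreover have "(\<lambda>x. f x - \<gamma> / 2 * (f' x \<bullet> f' x) + er (x - \<gamma> *\<^sub>R f' x)) = Fr"
    unfolding Fr_def by (simp add: power2_norm_eq_inner)
  moreover have "(\<lambda>h. h \<bullet> f' x - \<gamma> / 2 * (f' x \<bullet> A x h + A x h \<bullet> f' x) + (h - \<gamma> *\<^sub>R A x h) \<bullet> p) = (\<lambda>h. h \<bullet> Gm x)"
  proof
    fix h
    have U: "Um x = f' x + p" unfolding Um_def Tm_def p_def y_def using \<gamma>pos
      by (simp add: algebra_simps)
    have lin: "linear (blinfun_apply (A x))" by (simp add: blinfun.bounded_linear_right bounded_linear.linear)
    have "h \<bullet> Gm x = h \<bullet> Um x - \<gamma> * (\<Sum>i\<in>Basis. (A x i \<bullet> Um x) * (h \<bullet> i))"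
      unfolding Gm_def by (simp add: inner_diff_right inner_sum_right)
    also have "(\<Sum>i\<in>Basis. (A x i \<bullet> Um x) * (h \<bullet> i)) = A x h \<bullet> Um x"
      using inner_basis_sum[OF lin, of h "Um x"] by (simp add: mult.commute)
    finally show "h \<bullet> f' x - \<gamma> / 2 * (f' x \<bullet> A x h + A x h \<bullet> f' x) + (h - \<gamma> *\<^sub>R A x h) \<bullet> p = h \<bullet> Gm x"
      unfolding U by (simp add: inner_add_right inner_add_left inner_diff_left inner_commute algebra_simps)
  qed
  ultimately show ?thesis unfolding gderiv_def by simp
qed

end

lemma deriv_prod_zero:
  fixes a :: "'a::real_normed_vector \<Rightarrow> 'b::real_inner"
  assumes U: "(U has_derivative U') (at x0)" and U0: "U x0 = 0" and a: "isCont a x0"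
  shows "((\<lambda>x. a x \<bullet> U x) has_derivative (\<lambda>h. a x0 \<bullet> U' h)) (at x0)"
  unfolding has_derivative_at_alt
proof (intro conjI allI impI)
  have blU: "bounded_linear U'" using U has_derivative_bounded_linear by blast
  show "bounded_linear (\<lambda>h. a x0 \<bullet> U' h)" by (intro bounded_linear_inner_right_comp blU)
  fix e :: real assume e: "0 < e"
  obtain K where K: "K > 0" "\<And>h. norm (U' h) \<le> norm h * K" using bounded_linear.pos_bounded[OF blU] by blast
  define e1 where "e1 = min 1 (e / (2 * (norm (a x0) + 1)))"
  have "0 < 2 * (norm (a x0) + 1)" by (smt (verit) norm_ge_zero)
  then have e1: "0 < e1" "e1 \<le> 1" unfolding e1_def using e by (auto simp del: distrib_left_numeral)
  obtain d1 where d1: "d1 > 0" "\<And>y. norm (y - x0) < d1 \<Longrightarrow> norm (U y - U x0 - U' (y - x0)) \<le> e1 * norm (y - x0)"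
    using U e1(1) unfolding has_derivative_at_alt by blast
  define e2 where "e2 = e / (2 * (1 + K))"
  have e2: "0 < e2" unfolding e2_def using e K by simp
  obtain d2 where d2: "d2 > 0" "\<And>y. y \<noteq> x0 \<Longrightarrow> norm (y - x0) < d2 \<Longrightarrow> norm (a y - a x0) < e2"
    using a e2 unfolding isCont_def LIM_eq by blast
  show "\<exists>d>0. \<forall>y. norm (y - x0) < d \<longrightarrow>
      norm (a y \<bullet> U y - a x0 \<bullet> U x0 - a x0 \<bullet> U' (y - x0)) \<le> e * norm (y - x0)"
  proof (intro exI[of _ "min d1 d2"] conjI allI impI)
    show "0 < min d1 d2" using d1 d2 by simp
    fix y assume y: "norm (y - x0) < min d1 d2"
    show "norm (a y \<bullet> U y - a x0 \<bullet> U x0 - a x0 \<bullet> U' (y - x0)) \<le> e * norm (y - x0)"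
    proof (cases "y = x0")
      case True then show ?thesis using U0 blU by (simp add: linear_simps)
    next
      case False
      have r1: "norm (U y - U' (y - x0)) \<le> e1 * norm (y - x0)" using d1(2)[of y] y U0 by simp
      have r2: "norm (a y - a x0) \<le> e2" using d2(2)[of y] y False by simp
      have Uy: "norm (U y) \<le> (1 + K) * norm (y - x0)"
      proof -
        have "norm (U y) \<le> norm (U y - U' (y - x0)) + norm (U' (y - x0))" using norm_triangle_ineq[of "U y - U' (y - x0)" "U' (y - x0)"] by simp
        also have "\<dots> \<le> e1 * norm (y - x0) + norm (y - x0) * K" using r1 K(2) by (rule add_mono)
        also have "\<dots> \<le> 1 * norm (y - x0) + norm (y - x0) * K" using e1 by (intro add_right_mono mult_right_mono) auto
        finally show ?thesis by (simp add: algebra_simps)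
      qed
      have eq: "a y \<bullet> U y - a x0 \<bullet> U x0 - a x0 \<bullet> U' (y - x0) = a x0 \<bullet> (U y - U' (y - x0)) + (a y - a x0) \<bullet> U y"
        using U0 by (simp add: inner_diff_left inner_diff_right)
      have "norm (a y \<bullet> U y - a x0 \<bullet> U x0 - a x0 \<bullet> U' (y - x0)) \<le> norm (a x0) * norm (U y - U' (y - x0)) + norm (a y - a x0) * norm (U y)"
        unfolding eq real_norm_def by (rule order_trans[OF abs_triangle_ineq add_mono[OF Cauchy_Schwarz_ineq2 Cauchy_Schwarz_ineq2]])
      also have "\<dots> \<le> norm (a x0) * (e1 * norm (y - x0)) + e2 * ((1 + K) * norm (y - x0))"
        using r1 r2 Uy e2 by (intro add_mono mult_mono) auto
      also have "\<dots> \<le> e / 2 * norm (y - x0) + e / 2 * norm (y - x0)"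
      proof (intro add_mono)
        have n1: "0 < norm (a x0) + 1" by (smt (verit) norm_ge_zero)
        have "norm (a x0) * e1 \<le> (norm (a x0) + 1) * e1" using e1 by (simp add: mult_right_mono)
        also have "\<dots> \<le> (norm (a x0) + 1) * (e / (2 * (norm (a x0) + 1)))"
          using n1 unfolding e1_def by (intro mult_left_mono) auto
        also have "\<dots> = e / 2" using n1 by (simp add: field_simps)
        finally show "norm (a x0) * (e1 * norm (y - x0)) \<le> e / 2 * norm (y - x0)"
          by (metis mult.assoc mult_right_mono norm_ge_zero)
        have "e2 * (1 + K) = e / 2" unfolding e2_def using K by (simp add: field_simps)
        then have "e2 * ((1 + K) * norm (y - x0)) = e / 2 * norm (y - x0)" by (metis mult.assoc)
        then show "e2 * ((1 + K) * norm (y - x0)) \<le> e / 2 * norm (y - x0)" by (rule eq_refl)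
      qed
      finally show ?thesis by simp
    qed
  qed
qed

context gamh begin

lemma y0_eq: "x0 - \<gamma> *\<^sub>R f' x0 = y0" unfolding y0_def using v0 by simp

lemma Tm_x0: "Tm x0 = x0" unfolding Tm_def y0_eq Pr_y0 ..

lemma Um_x0: "Um x0 = 0" unfolding Um_def Tm_x0 by simp

lemma x0_ball: "x0 \<in> ball x0 \<epsilon>H" using \<epsilon>H by simp

definition "Ud h = (h - Dm (h - \<gamma> *\<^sub>R A x0 h)) /\<^sub>R \<gamma>"
definition "HH h = Ud h - \<gamma> *\<^sub>R (\<Sum>i\<in>Basis. (A x0 i \<bullet> Ud h) *\<^sub>R i)"

lemma Um_deriv: "(Um has_derivative Ud) (at x0)"
proof -
  have dy: "((\<lambda>x. x - \<gamma> *\<^sub>R f' x) has_derivative (\<lambda>h. h - \<gamma> *\<^sub>R A x0 h)) (at x0)"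
    by (intro derivative_intros hessd[OF x0_ball])
  have dP: "(Pr has_derivative Dm) (at (x0 - \<gamma> *\<^sub>R f' x0))" unfolding y0_eq by (rule Pr_deriv)
  have dT: "(Tm has_derivative (\<lambda>h. Dm (h - \<gamma> *\<^sub>R A x0 h))) (at x0)"
    unfolding Tm_def[abs_def] by (rule has_derivative_compose[OF dy dP])
  show ?thesis unfolding Um_def[abs_def] Ud_def[abs_def]
    by (intro derivative_intros dT)
qed

lemma A_cont: "isCont (\<lambda>x. blinfun_apply (A x) i) x0"
proof -
  have "isCont A x0" using continuous_on_interior[OF hessc] x0_ball by simp
  then show ?thesis unfolding isCont_def by (intro blinfun.tendsto tendsto_const)
qed

lemma Gm_deriv: "(Gm has_derivative HH) (at x0)"
proof -
  have "((\<lambda>x. A x i \<bullet> Um x) has_derivative (\<lambda>h. A x0 i \<bullet> Ud h)) (at x0)" for i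
    by (rule deriv_prod_zero[OF Um_deriv Um_x0 A_cont])
  then show ?thesis unfolding Gm_def[abs_def] HH_def[abs_def]
    by (intro derivative_intros Um_deriv) auto
qed

lemma Gm_x0: "Gm x0 = 0" unfolding Gm_def Um_x0 by simp

lemma HH_linear: "linear HH" using Gm_deriv has_derivative_linear by blast

end

context gamh begin

lemma HH_bl: "bounded_linear HH" using Gm_deriv has_derivative_bounded_linear by blast

lemma HH_scale: "HH (c *\<^sub>R v) = c *\<^sub>R HH v" using HH_linear by (simp add: linear_scale)

lemma TAY:
  assumes \<eta>: "0 < \<eta>"
  shows "\<exists>\<delta>>0. \<forall>v. norm v < \<delta> \<longrightarrow> \<bar>Fr (x0 + v) - Fr x0 - (HH v \<bullet> v) / 2\<bar> \<le> \<eta> * (norm v)^2"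
proof -
  obtain d where d: "d > 0" "\<And>y. norm (y - x0) < d \<Longrightarrow> norm (Gm y - Gm x0 - HH (y - x0)) \<le> \<eta> * norm (y - x0)"
    using Gm_deriv \<eta> unfolding has_derivative_at_alt by blast
  show ?thesis
  proof (intro exI[of _ "min d rho"] conjI allI impI)
    show "0 < min d rho" using d rho_pos by simp
    fix v :: 'a assume v: "norm v < min d rho"
    define \<phi> where "\<phi> = (\<lambda>s::real. Fr (x0 + s *\<^sub>R v) - s^2 / 2 * (HH v \<bullet> v))"
    define \<phi>' where "\<phi>' = (\<lambda>s::real. v \<bullet> Gm (x0 + s *\<^sub>R v) - s * (HH v \<bullet> v))"
    have der: "(\<phi> has_real_derivative \<phi>' s) (at s)" if s: "0 \<le> s" "s \<le> 1" for s
    proof -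
      have zn: "norm (x0 + s *\<^sub>R v - x0) < rho"
      proof -
        have "norm (x0 + s *\<^sub>R v - x0) = s * norm v" using s by simp
        also have "\<dots> \<le> norm v" using s by (simp add: mult_left_le_one_le)
        finally show ?thesis using v by simp
      qed
      have dF: "(Fr has_derivative (\<lambda>h. h \<bullet> Gm (x0 + s *\<^sub>R v))) (at (x0 + s *\<^sub>R v))"
        using Fr_deriv[OF zn] unfolding gderiv_def .
      have dl: "((\<lambda>t::real. x0 + t *\<^sub>R v) has_derivative (\<lambda>t. t *\<^sub>R v)) (at s)"
        by (intro derivative_eq_intros) auto
      have d1: "((\<lambda>t. Fr (x0 + t *\<^sub>R v)) has_derivative (\<lambda>t. (t *\<^sub>R v) \<bullet> Gm (x0 + s *\<^sub>R v))) (at s)"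
        by (rule has_derivative_compose[OF dl dF])
      have d2: "((\<lambda>t::real. t^2 / 2 * (HH v \<bullet> v)) has_derivative (\<lambda>t. t * (s * (HH v \<bullet> v)))) (at s)"
        by (auto intro!: derivative_eq_intros simp: power2_eq_square field_simps)
      have "(\<phi> has_derivative (\<lambda>t. (t *\<^sub>R v) \<bullet> Gm (x0 + s *\<^sub>R v) - t * (s * (HH v \<bullet> v)))) (at s)"
        unfolding \<phi>_def by (intro has_derivative_diff d1 d2)
      moreover have "(\<lambda>t. (t *\<^sub>R v) \<bullet> Gm (x0 + s *\<^sub>R v) - t * (s * (HH v \<bullet> v))) = (*) (\<phi>' s)"
        unfolding \<phi>'_def by (auto simp: algebra_simps)
      ultimately show ?thesis unfolding has_field_derivative_def by simp
    qed
    obtain \<xi> where \<xi>: "0 < \<xi>" "\<xi> < 1" "\<phi> 1 - \<phi> 0 = (1 - 0) * \<phi>' \<xi>"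
      using MVT2[of 0 1 \<phi> \<phi>'] der by auto
    have eq: "\<phi> 1 - \<phi> 0 = Fr (x0 + v) - Fr x0 - (HH v \<bullet> v) / 2" unfolding \<phi>_def by simp
    have "\<phi>' \<xi> = v \<bullet> (Gm (x0 + \<xi> *\<^sub>R v) - Gm x0 - HH (x0 + \<xi> *\<^sub>R v - x0))"
      unfolding \<phi>'_def Gm_x0 by (simp add: HH_scale inner_diff_right inner_commute)
    then have "\<bar>\<phi>' \<xi>\<bar> \<le> norm v * norm (Gm (x0 + \<xi> *\<^sub>R v) - Gm x0 - HH (x0 + \<xi> *\<^sub>R v - x0))"
      by (simp add: Cauchy_Schwarz_ineq2)
    also have "\<dots> \<le> norm v * (\<eta> * norm (x0 + \<xi> *\<^sub>R v - x0))"
    proof (intro mult_left_mono d(2))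
      have "norm (x0 + \<xi> *\<^sub>R v - x0) = \<xi> * norm v" using \<xi> by simp
      also have "\<dots> \<le> norm v" using \<xi> by (simp add: mult_left_le_one_le)
      finally show "norm (x0 + \<xi> *\<^sub>R v - x0) < d" using v by simp
    qed simp
    also have "\<dots> \<le> norm v * (\<eta> * norm v)"
    proof (rule mult_left_mono)
      have "norm (x0 + \<xi> *\<^sub>R v - x0) = \<xi> * norm v" using \<xi> by simp
      also have "\<dots> \<le> norm v" using \<xi> by (simp add: mult_left_le_one_le)
      finally show "\<eta> * norm (x0 + \<xi> *\<^sub>R v - x0) \<le> \<eta> * norm v" using \<eta> by simp
    qed simp
    finally show "\<bar>Fr (x0 + v) - Fr x0 - (HH v \<bullet> v) / 2\<bar> \<le> \<eta> * (norm v)^2"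
      using \<xi>(3) eq by (simp add: power2_eq_square algebra_simps)
  qed
qed

end

lemma abs_tri_half: fixes a b c e :: real shows "\<bar>a - b\<bar> \<le> e/2 \<Longrightarrow> \<bar>b - c\<bar> < e/2 \<Longrightarrow> \<bar>a - c\<bar> < e"
  by linarith

context base begin

lemma descent: "f z \<le> f x + f' x \<bullet> (z - x) + L * (norm (z - x))^2"
proof -
  define d where "d = z - x"
  define \<phi> where "\<phi> = (\<lambda>s::real. f (x + s *\<^sub>R d))"
  define \<phi>' where "\<phi>' = (\<lambda>s::real. d \<bullet> f' (x + s *\<^sub>R d))"
  have der: "(\<phi> has_real_derivative \<phi>' s) (at s)" for s
  proof -
    have dl: "((\<lambda>t::real. x + t *\<^sub>R d) has_derivative (\<lambda>t. t *\<^sub>R d)) (at s)"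
      by (intro derivative_eq_intros) auto
    have dF: "(f has_derivative (\<lambda>h. h \<bullet> f' (x + s *\<^sub>R d))) (at (x + s *\<^sub>R d))"
      using grad unfolding gderiv_def by blast
    have "(\<phi> has_derivative (\<lambda>t. (t *\<^sub>R d) \<bullet> f' (x + s *\<^sub>R d))) (at s)"
      unfolding \<phi>_def by (rule has_derivative_compose[OF dl dF])
    moreover have "(\<lambda>t. (t *\<^sub>R d) \<bullet> f' (x + s *\<^sub>R d)) = (*) (\<phi>' s)"
      unfolding \<phi>'_def by auto
    ultimately show ?thesis unfolding has_field_derivative_def by simp
  qed
  obtain \<xi> where \<xi>: "0 < \<xi>" "\<xi> < 1" "\<phi> 1 - \<phi> 0 = (1 - 0) * \<phi>' \<xi>"
    using MVT2[of 0 1 \<phi> \<phi>'] der by auto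
  have "\<phi>' \<xi> - d \<bullet> f' x = d \<bullet> (f' (x + \<xi> *\<^sub>R d) - f' x)" unfolding \<phi>'_def by (simp add: inner_diff_right)
  also have "\<dots> \<le> norm d * norm (f' (x + \<xi> *\<^sub>R d) - f' x)" by (rule norm_cauchy_schwarz)
  also have "\<dots> \<le> norm d * (L * norm (x + \<xi> *\<^sub>R d - x))" by (intro mult_left_mono f'_lip) simp
  also have "\<dots> \<le> norm d * (L * norm d)"
    using \<xi> L_nonneg by (intro mult_left_mono) (auto simp: mult_left_le_one_le)
  finally have "\<phi>' \<xi> - d \<bullet> f' x \<le> L * (norm d)^2" by (simp add: power2_eq_square algebra_simps)
  then show ?thesis using \<xi>(3) unfolding \<phi>_def d_def by (simp add: inner_commute)
qed

end

context gamh begin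

lemma QCONV: "((\<lambda>p. (Fr (x0 + fst p *\<^sub>R snd p) - Fr x0) * (2 / (fst p)^2)) \<longlongrightarrow> HH u \<bullet> u) (at_right 0 \<times>\<^sub>F nhds u)"
  unfolding tendsto_iff
proof (intro allI impI)
  fix e :: real assume e: "0 < e"
  define B where "B = norm u + 1"
  have B: "0 < B" unfolding B_def by (smt (verit) norm_ge_zero)
  have id: "((\<lambda>w. w) \<longlongrightarrow> u) (nhds u)" unfolding tendsto_def eventually_nhds by blast
  have cont: "((\<lambda>w. HH w \<bullet> w) \<longlongrightarrow> HH u \<bullet> u) (nhds u)"
    by (intro tendsto_intros bounded_linear.tendsto[OF HH_bl] id)
  have ev1: "eventually (\<lambda>w. dist (HH w \<bullet> w) (HH u \<bullet> u) < e/2) (nhds u)"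
  proof -
    have "0 < e/2" using e by simp
    then show ?thesis using cont unfolding tendsto_iff by blast
  qed
  have ev2: "eventually (\<lambda>w. dist w u < 1) (nhds u)" using id unfolding tendsto_iff by simp
  define \<eta> where "\<eta> = e / (4 * B^2)"
  have \<eta>: "0 < \<eta>" unfolding \<eta>_def using e B by simp
  obtain \<delta> where \<delta>: "\<delta> > 0" "\<And>v. norm v < \<delta> \<Longrightarrow> \<bar>Fr (x0 + v) - Fr x0 - (HH v \<bullet> v) / 2\<bar> \<le> \<eta> * (norm v)^2"
    using TAY[OF \<eta>] by blast
  show "eventually (\<lambda>p. dist ((Fr (x0 + fst p *\<^sub>R snd p) - Fr x0) * (2 / (fst p)^2)) (HH u \<bullet> u) < e) (at_right 0 \<times>\<^sub>F nhds u)"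
    unfolding eventually_prod_filter
  proof (intro exI conjI allI impI)
    show "eventually (\<lambda>t::real. t \<in> {0<..<\<delta>/B}) (at_right 0)" using \<delta> B by (intro eventually_at_right_real) simp
    show "eventually (\<lambda>w. dist (HH w \<bullet> w) (HH u \<bullet> u) < e/2 \<and> dist w u < 1) (nhds u)"
      using ev1 ev2 by (rule eventually_conj)
    fix t :: real and w :: 'a
    assume t: "t \<in> {0<..<\<delta>/B}" and w: "dist (HH w \<bullet> w) (HH u \<bullet> u) < e/2 \<and> dist w u < 1"
    have tpos: "0 < t" using t by simp
    have wB: "norm w < B"
    proof -
      have "norm w \<le> norm u + norm (w - u)" using norm_triangle_ineq[of u "w - u"] by simp
      then show ?thesis using w unfolding B_def by (simp add: dist_norm)
    qed
    have tw: "norm (t *\<^sub>R w) < \<delta>"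
    proof -
      have "norm (t *\<^sub>R w) = t * norm w" using tpos by simp
      also have "\<dots> \<le> t * B" using wB tpos by (intro mult_left_mono) auto
      also have "\<dots> < (\<delta> / B) * B" using t B by (intro mult_strict_right_mono) auto
      finally show ?thesis using B by simp
    qed
    have T: "\<bar>Fr (x0 + t *\<^sub>R w) - Fr x0 - t^2 * (HH w \<bullet> w) / 2\<bar> \<le> \<eta> * (t^2 * (norm w)^2)"
      using \<delta>(2)[OF tw] tpos by (simp add: HH_scale power2_eq_square algebra_simps)
    have eqQ: "(Fr (x0 + t *\<^sub>R w) - Fr x0) * (2 / t^2) - HH w \<bullet> w
       = (Fr (x0 + t *\<^sub>R w) - Fr x0 - t^2 * (HH w \<bullet> w) / 2) * (2 / t^2)"
      using tpos by (simp add: field_simps)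
    have "\<bar>(Fr (x0 + t *\<^sub>R w) - Fr x0) * (2 / t^2) - HH w \<bullet> w\<bar> \<le> \<eta> * (t^2 * (norm w)^2) * (2 / t^2)"
    proof -
      have k: "\<bar>2 / t^2\<bar> = 2 / t^2" by simp
      show ?thesis unfolding eqQ abs_mult k by (rule mult_right_mono[OF T]) simp
    qed
    also have "\<dots> = 2 * \<eta> * (norm w)^2" using tpos by (simp add: field_simps)
    also have "\<dots> \<le> 2 * \<eta> * B^2"
      using wB \<eta> by (intro mult_left_mono power_mono) auto
    also have "\<dots> = e / 2" unfolding \<eta>_def using B by (simp add: field_simps)
    finally have a: "\<bar>(Fr (x0 + t *\<^sub>R w) - Fr x0) * (2 / t^2) - HH w \<bullet> w\<bar> \<le> e / 2" .
    have b: "\<bar>HH w \<bullet> w - HH u \<bullet> u\<bar> < e / 2" using w by (simp add: dist_real_def)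
    show "dist ((Fr (x0 + fst (t, w) *\<^sub>R snd (t, w)) - Fr x0) * (2 / (fst (t, w))^2)) (HH u \<bullet> u) < e"
      unfolding dist_real_def fst_conv snd_conv by (rule abs_tri_half[OF a b])
  qed
qed

lemma fbe_quot: "second_diff_quot (fbe f f' g \<gamma>) x0 0 t w = ereal ((Fr (x0 + t *\<^sub>R w) - Fr x0) * (2 / t^2))"
  unfolding second_diff_quot_def fbe_eq by simp

lemma F_nbot: "at_right (0::real) \<times>\<^sub>F nhds (d::'a) \<noteq> bot"
  by (simp add: prod_filter_eq_bot)

lemma fbe_d2: "second_subderiv (fbe f f' g \<gamma>) x0 0 d = ereal (HH d \<bullet> d)"
proof -
  have "(\<lambda>(t, w'). second_diff_quot (fbe f f' g \<gamma>) x0 0 t w') = (\<lambda>p. ereal ((Fr (x0 + fst p *\<^sub>R snd p) - Fr x0) * (2 / (fst p)^2)))"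
    by (auto simp: fbe_quot)
  then show ?thesis unfolding second_subderiv_def
    using lim_imp_Liminf[OF F_nbot tendsto_ereal[OF QCONV]] by simp
qed

lemma S2: "fbe f f' g \<gamma> x \<le> ereal (f x) + g x"
  unfolding fbe_def by (rule INF_lower2[of x]) simp_all

lemma S3: "Fr x0 = f x0 + g0"
proof -
  have "er y0 = g0 + (norm (x0 - y0))^2 / (2*\<gamma>)" unfolding er_def Pr_y0 gr_def g0 by (simp add: norm_minus_commute)
  moreover have "x0 - y0 = - (\<gamma> *\<^sub>R v0)" unfolding y0_def by simp
  ultimately have "er y0 = g0 + \<gamma> / 2 * (norm v0)^2" using \<gamma>pos by (simp add: power2_eq_square field_simps)
  then show ?thesis unfolding Fr_def y0_eq using v0 by simp
qed

end

context gamh begin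

lemma S1: "ereal (f (Tm x)) + g (Tm x) \<le> ereal (Fr x)"
proof -
  define y where "y = x - \<gamma> *\<^sub>R f' x"
  have gT: "g (Tm x) = ereal (gr (Tm x))" unfolding Tm_def by (rule gx_fin[OF Pr_in])
  have e: "Tm x - y = (Tm x - x) + \<gamma> *\<^sub>R f' x" unfolding y_def by simp
  have n: "(norm (Tm x - y))^2 = (norm (Tm x - x))^2 + 2 * \<gamma> * ((Tm x - x) \<bullet> f' x) + \<gamma>^2 * (norm (f' x))^2"
    unfolding e nsq_add[of "Tm x - x" "\<gamma> *\<^sub>R f' x"] by (simp add: power_mult_distrib)
  have A: "Fr x = f x - \<gamma> / 2 * (norm (f' x))^2 + gr (Tm x) + (norm (Tm x - y))^2 / (2*\<gamma>)"
    unfolding Fr_def er_def Tm_def y_def by simp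
  have B: "(norm (Tm x - y))^2 / (2*\<gamma>) = (norm (Tm x - x))^2 / (2*\<gamma>) + (Tm x - x) \<bullet> f' x + \<gamma> / 2 * (norm (f' x))^2"
    unfolding n using \<gamma>pos by (simp add: add_divide_distrib power2_eq_square)
  have Fr_eq: "Fr x = f x + f' x \<bullet> (Tm x - x) + (norm (Tm x - x))^2 / (2*\<gamma>) + gr (Tm x)"
    unfolding A B by (simp add: inner_commute)
  have "f (Tm x) \<le> f x + f' x \<bullet> (Tm x - x) + L * (norm (Tm x - x))^2" by (rule descent)
  also have "L * (norm (Tm x - x))^2 \<le> (norm (Tm x - x))^2 / (2*\<gamma>)"
  proof -
    have "L \<le> 1 / (2*\<gamma>)" using \<gamma>L \<gamma>pos by (simp add: field_simps)
    then have "L * (norm (Tm x - x))^2 \<le> 1 / (2*\<gamma>) * (norm (Tm x - x))^2" by (rule mult_right_mono) simp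
    then show ?thesis by simp
  qed
  finally have "f (Tm x) + gr (Tm x) \<le> Fr x" unfolding Fr_eq by simp
  then show ?thesis unfolding gT by simp
qed

end

lemma frechet_imp_limiting: "v \<in> frechet_subdiff g x \<Longrightarrow> v \<in> limiting_subdiff g x"
  unfolding limiting_subdiff_def
  by (intro CollectI conjI exI[of _ "\<lambda>k. x"] exI[of _ "\<lambda>k. v"]) (auto simp: frechet_subdiff_def)

context gamh begin

abbreviation "phi \<equiv> (\<lambda>x. ereal (f x) + g x)"

lemma phi_x0: "phi x0 = ereal (f x0 + g0)" using g0 by simp

lemma fbe_x0: "fbe f f' g \<gamma> x0 = phi x0" unfolding fbe_eq S3 phi_x0 ..

lemma fo_phi: "0 \<in> limiting_subdiff phi x0"
proof (rule frechet_imp_limiting)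
  show "0 \<in> frechet_subdiff phi x0"
    unfolding frechet_subdiff_def
  proof (intro CollectI conjI allI impI)
    show "\<bar>phi x0\<bar> \<noteq> \<infinity>" unfolding phi_x0 by simp
    fix e :: real assume e: "0 < e"
    have e2: "0 < e / 2" using e by simp
    obtain d1 where d1: "d1 > 0" "\<And>y. norm (y - x0) < d1 \<Longrightarrow> norm (f y - f x0 - (y - x0) \<bullet> f' x0) \<le> e / 2 * norm (y - x0)"
      using grad[of x0] e2 unfolding gderiv_def has_derivative_at_alt by blast
    show "\<exists>d>0. \<forall>y. norm (y - x0) < d \<longrightarrow> phi x0 + ereal (0 \<bullet> (y - x0) - e * norm (y - x0)) \<le> phi y"
    proof (intro exI[of _ "min d1 (\<gamma>1 * e)"] conjI allI impI)
      show "0 < min d1 (\<gamma>1 * e)" using d1 e \<gamma>1 by simp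
      fix y assume y: "norm (y - x0) < min d1 (\<gamma>1 * e)"
      define n where "n = norm (y - x0)"
      have a: "\<bar>f y - f x0 - (y - x0) \<bullet> f' x0\<bar> \<le> e / 2 * n"
        using d1(2)[of y] y unfolding n_def by simp
      have fy: "f x0 + (y - x0) \<bullet> f' x0 - e / 2 * n \<le> f y" using a by linarith
      have q: "n^2 / (2*\<gamma>1) \<le> e / 2 * n"
      proof -
        have "n^2 = n * n" by (simp add: power2_eq_square)
        also have "\<dots> \<le> n * (\<gamma>1 * e)" using y unfolding n_def by (intro mult_left_mono) auto
        finally show ?thesis using \<gamma>1 by (simp add: field_simps)
      qed
      show "phi x0 + ereal (0 \<bullet> (y - x0) - e * norm (y - x0)) \<le> phi y"
      proof (cases "g y")
        case (real G)
        have "ereal (g0 + v0 \<bullet> (y - x0) - n^2 / (2*\<gamma>1)) \<le> g y" using glb[of y] unfolding n_def .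
        then have gy: "g0 + v0 \<bullet> (y - x0) - n^2 / (2*\<gamma>1) \<le> G" using real by simp
        have "f x0 + g0 - e * n \<le> f y + G"
          using fy gy q v0 by (simp add: inner_commute)
        then show ?thesis unfolding phi_x0 real n_def by simp
      next
        case PInf then show ?thesis unfolding phi_x0 by simp
      next
        case MInf then show ?thesis using g_nm[of y] by simp
      qed
    qed
  qed
qed

lemma fo_fbe: "0 \<in> limiting_subdiff (fbe f f' g \<gamma>) x0"
proof (rule frechet_imp_limiting)
  have dF: "(Fr has_derivative (\<lambda>h. h \<bullet> Gm x0)) (at x0)"
    using Fr_deriv[of x0] rho_pos unfolding gderiv_def by simp
  show "0 \<in> frechet_subdiff (fbe f f' g \<gamma>) x0"
    unfolding frechet_subdiff_def fbe_eq
  proof (intro CollectI conjI allI impI)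
    show "\<bar>ereal (Fr x0)\<bar> \<noteq> \<infinity>" by simp
    fix e :: real assume e: "0 < e"
    obtain d where d: "d > 0" "\<And>y. norm (y - x0) < d \<Longrightarrow> norm (Fr y - Fr x0 - (y - x0) \<bullet> Gm x0) \<le> e * norm (y - x0)"
      using dF e unfolding has_derivative_at_alt by blast
    show "\<exists>d>0. \<forall>y. norm (y - x0) < d \<longrightarrow> ereal (Fr x0) + ereal (0 \<bullet> (y - x0) - e * norm (y - x0)) \<le> ereal (Fr y)"
    proof (intro exI[of _ d] conjI allI impI d(1))
      fix y assume "norm (y - x0) < d"
      then have "norm (Fr y - Fr x0) \<le> e * norm (y - x0)" using d(2)[of y] Gm_x0 by simp
      then show "ereal (Fr x0) + ereal (0 \<bullet> (y - x0) - e * norm (y - x0)) \<le> ereal (Fr y)"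
        by (simp add: abs_le_iff)
    qed
  qed
qed

lemma twice_diff: "twice_diff_at (fbe f f' g \<gamma>) x0 HH"
  unfolding twice_diff_at_def
proof (intro exI[of _ rho] exI[of _ Gm] conjI ballI rho_pos Gm_deriv)
  fix y assume y: "y \<in> ball x0 rho"
  show "\<bar>fbe f f' g \<gamma> y\<bar> \<noteq> \<infinity>" unfolding fbe_eq by simp
  have "(\<lambda>z. real_of_ereal (fbe f f' g \<gamma> z)) = Fr" unfolding fbe_eq by simp
  moreover have "norm (y - x0) < rho" using y by (simp add: dist_norm norm_minus_commute)
  ultimately show "GDERIV (\<lambda>z. real_of_ereal (fbe f f' g \<gamma> z)) y :> Gm y" using Fr_deriv by simp
qed

end

context gamh begin

lemma ydist: "norm (x - \<gamma> *\<^sub>R f' x - y0) \<le> (1 + \<gamma> * L) * norm (x - x0)"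
proof -
  have "x - \<gamma> *\<^sub>R f' x - y0 = (x - x0) - \<gamma> *\<^sub>R (f' x - f' x0)" unfolding y0_def using v0 by (simp add: algebra_simps)
  then have "norm (x - \<gamma> *\<^sub>R f' x - y0) = norm ((x - x0) - \<gamma> *\<^sub>R (f' x - f' x0))" by metis
  also have "\<dots> \<le> norm (x - x0) + \<gamma> * norm (f' x - f' x0)"
    using norm_triangle_ineq4[of "x - x0" "\<gamma> *\<^sub>R (f' x - f' x0)"] \<gamma>pos by simp
  also have "\<dots> \<le> norm (x - x0) + \<gamma> * (L * norm (x - x0))"
    using f'_lip \<gamma>pos by (intro add_left_mono mult_left_mono) auto
  also have "\<dots> = (1 + \<gamma> * L) * norm (x - x0)" by (simp add: algebra_simps)
  finally show ?thesis .
qed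

lemma Tm_calm: "norm (Tm x - x0) \<le> kap * (1 + \<gamma> * L) * norm (x - x0)"
proof -
  have "norm (Tm x - x0) \<le> kap * norm (x - \<gamma> *\<^sub>R f' x - y0)" unfolding Tm_def by (rule calm'[OF Pr_in])
  also have "\<dots> \<le> kap * ((1 + \<gamma> * L) * norm (x - x0))" using kap_pos ydist by (intro mult_left_mono) auto
  finally show ?thesis by (simp add: mult.assoc)
qed

lemma quot_mono:
  assumes "a \<le> b"
  shows "(a - ereal c - ereal z) * ereal k \<le> (b - ereal c - ereal z) * ereal k \<or> k < 0"
proof (cases "k < 0")
  case False
  have "a - ereal c \<le> b - ereal c" using assms by (rule ereal_minus_mono) simp
  then have "a - ereal c - ereal z \<le> b - ereal c - ereal z" by (rule ereal_minus_mono) simp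
  then show ?thesis using False by (intro disjI1 ereal_mult_right_mono) auto
qed simp

lemma quot_fbe_phi:
  "second_diff_quot (fbe f f' g \<gamma>) x0 0 t w \<le> second_diff_quot phi x0 0 t w"
proof -
  have "(fbe f f' g \<gamma> (x0 + t *\<^sub>R w) - ereal (f x0 + g0) - ereal (t * (0 \<bullet> w))) * ereal (2 / t^2)
     \<le> (phi (x0 + t *\<^sub>R w) - ereal (f x0 + g0) - ereal (t * (0 \<bullet> w))) * ereal (2 / t^2)"
    using quot_mono[OF S2] by (metis not_less zero_le_divide_iff zero_le_numeral zero_le_power2)
  then show ?thesis unfolding second_diff_quot_def fbe_x0 phi_x0 .
qed

lemma quot_phi_T:
  assumes t: "0 < t"
  shows "second_diff_quot phi x0 0 t ((Tm x - x0) /\<^sub>R t) \<le> ereal ((Fr x - Fr x0) * (2 / t^2))"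
proof -
  have e: "x0 + t *\<^sub>R ((Tm x - x0) /\<^sub>R t) = Tm x" using t by simp
  have "(phi (Tm x) - ereal (Fr x0) - ereal 0) * ereal (2 / t^2) \<le> (ereal (Fr x) - ereal (Fr x0) - ereal 0) * ereal (2 / t^2)"
    using quot_mono[OF S1[of x], where c = "Fr x0" and z = 0 and k = "2 / t^2"] by (metis not_less zero_le_divide_iff zero_le_numeral zero_le_power2)
  then show ?thesis unfolding second_diff_quot_def e using S3 phi_x0 by (simp add: S3)
qed

lemma Qfr_seq:
  assumes "\<And>k. 0 < \<tau> k" "\<tau> \<longlonglongrightarrow> 0" "w \<longlonglongrightarrow> u"
  shows "(\<lambda>k. (Fr (x0 + \<tau> k *\<^sub>R w k) - Fr x0) * (2 / (\<tau> k)^2)) \<longlonglongrightarrow> HH u \<bullet> u"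
  using filterlim_compose[OF QCONV seq_filterlim_prod[OF assms]] by simp

lemma equiv2: "(\<forall>s. 0 \<le> second_subderiv phi x0 0 s) \<longleftrightarrow> (\<forall>s. 0 \<le> HH s \<bullet> s)"
proof
  assume H: "\<forall>s. 0 \<le> second_subderiv phi x0 0 s"
  show "\<forall>s. 0 \<le> HH s \<bullet> s"
  proof (rule ccontr)
    assume "\<not> (\<forall>s. 0 \<le> HH s \<bullet> s)"
    then obtain s where a: "HH s \<bullet> s < 0" by (auto simp: not_le)
    define t where "t = (\<lambda>k. inverse (real (Suc k)))"
    have t: "\<And>k. 0 < t k" "t \<longlonglongrightarrow> 0" unfolding t_def using LIMSEQ_inverse_real_of_nat by auto
    define wk where "wk = (\<lambda>k. (Tm (x0 + t k *\<^sub>R s) - x0) /\<^sub>R t k)"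
    have wb: "norm (wk k) \<le> kap * (1 + \<gamma> * L) * norm s" for k
    proof -
      have "norm (Tm (x0 + t k *\<^sub>R s) - x0) \<le> kap * (1 + \<gamma> * L) * (t k * norm s)"
        using Tm_calm[of "x0 + t k *\<^sub>R s"] t(1)[of k] by simp
      moreover have "norm (wk k) = norm (Tm (x0 + t k *\<^sub>R s) - x0) / t k" unfolding wk_def using t(1)[of k]
        by (simp add: divide_inverse_commute)
      ultimately have "t k * norm (wk k) \<le> t k * (kap * (1 + \<gamma> * L) * norm s)"
        using t(1)[of k] by (simp add: algebra_simps)
      then show ?thesis using t(1)[of k] by (simp add: mult_le_cancel_left_pos)
    qed
    then have "bounded (range wk)" unfolding bounded_iff by blast
    then obtain w and r :: "nat \<Rightarrow> nat" where r: "strict_mono r" "(wk \<circ> r) \<longlonglongrightarrow> w"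
      using bounded_imp_convergent_subsequence by blast
    have tr: "\<And>k. 0 < t (r k)" "(\<lambda>k. t (r k)) \<longlonglongrightarrow> 0"
      using t LIMSEQ_subseq_LIMSEQ[OF t(2) r(1)] by (auto simp: o_def)
    have wr: "(\<lambda>k. wk (r k)) \<longlonglongrightarrow> w" using r(2) by (simp add: o_def)
    have "(\<lambda>k. (Fr (x0 + t (r k) *\<^sub>R s) - Fr x0) * (2 / (t (r k))^2)) \<longlonglongrightarrow> HH s \<bullet> s"
      by (rule Qfr_seq[OF tr]) simp
    moreover have "HH s \<bullet> s < HH s \<bullet> s / 2" using a by simp
    ultimately have ev: "eventually (\<lambda>k. (Fr (x0 + t (r k) *\<^sub>R s) - Fr x0) * (2 / (t (r k))^2) < HH s \<bullet> s / 2) sequentially"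
      by (rule order_tendstoD(2))
    have "second_subderiv phi x0 0 w \<le> liminf (\<lambda>k. second_diff_quot phi x0 0 (t (r k)) (wk (r k)))"
      unfolding second_subderiv_def
      using Liminf_le_seq[OF seq_filterlim_prod[OF tr wr], of "\<lambda>(t, w'). second_diff_quot phi x0 0 t w'"] by simp
    also have "\<dots> \<le> ereal (HH s \<bullet> s / 2)"
    proof (rule Liminf_le)
      show "eventually (\<lambda>k. second_diff_quot phi x0 0 (t (r k)) (wk (r k)) \<le> ereal (HH s \<bullet> s / 2)) sequentially"
        using ev
      proof (rule eventually_mono)
        fix k assume k: "(Fr (x0 + t (r k) *\<^sub>R s) - Fr x0) * (2 / (t (r k))^2) < HH s \<bullet> s / 2"
        have "second_diff_quot phi x0 0 (t (r k)) (wk (r k)) \<le> ereal ((Fr (x0 + t (r k) *\<^sub>R s) - Fr x0) * (2 / (t (r k))^2))"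
          unfolding wk_def by (rule quot_phi_T[OF tr(1)])
        also have "\<dots> \<le> ereal (HH s \<bullet> s / 2)" using k by simp
        finally show "second_diff_quot phi x0 0 (t (r k)) (wk (r k)) \<le> ereal (HH s \<bullet> s / 2)" .
      qed
    qed simp
    finally have "second_subderiv phi x0 0 w < 0" using a by (simp add: le_less_trans)
    with H show False by (simp add: not_le[symmetric])
  qed
next
  assume H: "\<forall>s. 0 \<le> HH s \<bullet> s"
  show "\<forall>s. 0 \<le> second_subderiv phi x0 0 s"
  proof (rule allI, rule ccontr)
    fix u assume "\<not> 0 \<le> second_subderiv phi x0 0 u"
    then obtain y where y: "y < 0" "\<not> eventually (\<lambda>p. y < (case p of (t, w') \<Rightarrow> second_diff_quot phi x0 0 t w')) (at_right 0 \<times>\<^sub>F nhds u)"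
      unfolding second_subderiv_def le_Liminf_iff by blast
    obtain \<tau> w where tw: "\<And>k. 0 < \<tau> k" "\<tau> \<longlonglongrightarrow> 0" "w \<longlonglongrightarrow> u" "\<And>k. \<not> y < second_diff_quot phi x0 0 (\<tau> k) (w k)"
      using y(2) by (rule freq_seq) auto
    have lim: "(\<lambda>k. ereal ((Fr (x0 + \<tau> k *\<^sub>R w k) - Fr x0) * (2 / (\<tau> k)^2))) \<longlonglongrightarrow> ereal (HH u \<bullet> u)"
      by (intro tendsto_ereal Qfr_seq tw)
    have "ereal ((Fr (x0 + \<tau> k *\<^sub>R w k) - Fr x0) * (2 / (\<tau> k)^2)) \<le> y" for k
    proof -
      have "ereal ((Fr (x0 + \<tau> k *\<^sub>R w k) - Fr x0) * (2 / (\<tau> k)^2)) = second_diff_quot (fbe f f' g \<gamma>) x0 0 (\<tau> k) (w k)"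
        by (simp add: fbe_quot)
      also have "\<dots> \<le> second_diff_quot phi x0 0 (\<tau> k) (w k)" by (rule quot_fbe_phi)
      also have "\<dots> \<le> y" using tw(4)[of k] by (simp add: not_less)
      finally show ?thesis .
    qed
    then have "ereal (HH u \<bullet> u) \<le> y" by (intro LIMSEQ_le_const2[OF lim]) auto
    moreover have "0 \<le> ereal (HH u \<bullet> u)" using H by simp
    ultimately have "0 \<le> y" by (metis order_trans)
    then show False using y(1) by simp
  qed
qed

lemma sosp_equiv: "second_order_stationary phi x0 \<longleftrightarrow> second_order_stationary (fbe f f' g \<gamma>) x0"
proof -
  have "second_order_stationary phi x0 \<longleftrightarrow> (\<forall>d. 0 \<le> second_subderiv phi x0 0 d)"
    unfolding second_order_stationary_def using fo_phi phi_x0 by simp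
  also have "\<dots> \<longleftrightarrow> (\<forall>s. 0 \<le> HH s \<bullet> s)" by (rule equiv2)
  also have "\<dots> \<longleftrightarrow> (\<forall>d. 0 \<le> second_subderiv (fbe f f' g \<gamma>) x0 0 d)" unfolding fbe_d2 by simp
  also have "\<dots> \<longleftrightarrow> second_order_stationary (fbe f f' g \<gamma>) x0"
    unfolding second_order_stationary_def using fo_fbe fbe_eq by simp
  finally show ?thesis .
qed

lemma main_gam:
  "(\<exists>H. twice_diff_at (fbe f f' g \<gamma>) x0 H \<and>
      ((\<forall>s. second_subderiv (\<lambda>x. ereal (f x) + g x) x0 0 s \<ge> 0) \<longleftrightarrow> (\<forall>s. H s \<bullet> s \<ge> 0))) \<and>
   (second_order_stationary (\<lambda>x. ereal (f x) + g x) x0 \<longleftrightarrow> second_order_stationary (fbe f f' g \<gamma>) x0)"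
  using twice_diff equiv2 sosp_equiv by blast

end

lemma glb_from_prox:
  fixes g :: "'a::euclidean_space \<Rightarrow> ereal"
  assumes p: "x0 \<in> prox \<gamma>1 g (x0 + \<gamma>1 *\<^sub>R v0)" and g0: "g x0 = ereal g0" and \<gamma>1: "0 < \<gamma>1"
    and nm: "\<And>x. g x \<noteq> -\<infinity>"
  shows "ereal (g0 + v0 \<bullet> (z - x0) - (norm (z - x0))^2 / (2*\<gamma>1)) \<le> g z"
proof -
  have "g x0 + ereal ((norm (x0 - (x0 + \<gamma>1 *\<^sub>R v0)))^2 / (2*\<gamma>1)) \<le> g z + ereal ((norm (z - (x0 + \<gamma>1 *\<^sub>R v0)))^2 / (2*\<gamma>1))"
    using p unfolding prox_def by blast
  moreover have "(norm (x0 - (x0 + \<gamma>1 *\<^sub>R v0)))^2 = \<gamma>1^2 * (norm v0)^2" using \<gamma>1 by (simp add: power_mult_distrib)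
  moreover have "(norm (z - (x0 + \<gamma>1 *\<^sub>R v0)))^2 = (norm (z - x0))^2 - 2 * \<gamma>1 * (v0 \<bullet> (z - x0)) + \<gamma>1^2 * (norm v0)^2"
  proof -
    have e: "z - (x0 + \<gamma>1 *\<^sub>R v0) = (z - x0) - \<gamma>1 *\<^sub>R v0" by simp
    show ?thesis unfolding e nsq_diff[of "z - x0" "\<gamma>1 *\<^sub>R v0"] by (simp add: power_mult_distrib inner_commute)
  qed
  ultimately have A: "ereal g0 + ereal (\<gamma>1^2 * (norm v0)^2 / (2*\<gamma>1))
     \<le> g z + ereal (((norm (z - x0))^2 - 2 * \<gamma>1 * (v0 \<bullet> (z - x0)) + \<gamma>1^2 * (norm v0)^2) / (2*\<gamma>1))"
    unfolding g0 by simp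
  show ?thesis
  proof (cases "g z")
    case (real G)
    have "g0 + \<gamma>1^2 * (norm v0)^2 / (2*\<gamma>1) \<le> G + ((norm (z - x0))^2 - 2 * \<gamma>1 * (v0 \<bullet> (z - x0)) + \<gamma>1^2 * (norm v0)^2) / (2*\<gamma>1)"
      using A real by simp
    moreover have "((norm (z - x0))^2 - 2 * \<gamma>1 * (v0 \<bullet> (z - x0)) + \<gamma>1^2 * (norm v0)^2) / (2*\<gamma>1)
       = (norm (z - x0))^2 / (2*\<gamma>1) - v0 \<bullet> (z - x0) + \<gamma>1^2 * (norm v0)^2 / (2*\<gamma>1)"
      using \<gamma>1 by (simp add: field_simps)
    ultimately show ?thesis using real by simp
  next
    case PInf then show ?thesis by simp
  next
    case MInf then show ?thesis using nm[of z] by simp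
  qed
qed

theorem theorem3p8:
  fixes f :: "'a::euclidean_space \<Rightarrow> real"
    and f' :: "'a \<Rightarrow> 'a"
    and Lf :: real
    and g :: "'a \<Rightarrow> ereal"
    and \<gamma>g :: ereal
    and xs :: 'a
  assumes grad: "\<And>x. GDERIV f x :> f' x"
    and lip: "Lf-lipschitz_on UNIV f'"
    and g_proper: "proper_fun g"
    and g_lsc: "lsc_fun g"
    and \<gamma>g_pos: "0 < \<gamma>g"
    and g_pb: "prox_bounded g \<gamma>g"
    and argmin: "\<exists>x. \<forall>y. ereal (f x) + g x \<le> ereal (f y) + g y"
    and crit: "critical_point f' g \<gamma>g xs"
    and hess_f: "\<exists>\<epsilon>>0. \<exists>H :: 'a \<Rightarrow> ('a \<Rightarrow>\<^sub>L 'a).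
                   (\<forall>x\<in>ball xs \<epsilon>. (f' has_derivative blinfun_apply (H x)) (at x)) \<and>
                   continuous_on (ball xs \<epsilon>) H"
    and g_preg: "prox_regular_at g xs (- f' xs)"
    and g_epi: "twice_epi_differentiable g xs (- f' xs)"
    and g_gq: "generalized_quadratic (second_subderiv g xs (- f' xs))"
  shows "\<exists>\<gamma>0>0. \<forall>\<gamma>. 0 < \<gamma> \<and> \<gamma> < \<gamma>0 \<longrightarrow>
           (\<exists>H. twice_diff_at (fbe f f' g \<gamma>) xs H \<and>
              ((\<forall>s. second_subderiv (\<lambda>x. ereal (f x) + g x) xs 0 s \<ge> 0)
                 \<longleftrightarrow> (\<forall>s. H s \<bullet> s \<ge> 0))) \<and>
           (second_order_stationary (\<lambda>x. ereal (f x) + g x) xs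
              \<longleftrightarrow> second_order_stationary (fbe f f' g \<gamma>) xs)"
proof -
  obtain \<gamma>1 where \<gamma>1: "0 < \<gamma>1" "xs \<in> prox \<gamma>1 g (xs - \<gamma>1 *\<^sub>R f' xs)"
    using crit unfolding critical_point_def by blast
  have nm: "\<And>x. g x \<noteq> -\<infinity>" using g_proper unfolding proper_fun_def by blast
  have gfin: "\<bar>g xs\<bar> \<noteq> \<infinity>" using g_preg unfolding prox_regular_at_def by (rule conjunct1)
  define g0 where "g0 = real_of_ereal (g xs)"
  have g0: "g xs = ereal g0" unfolding g0_def using gfin by (cases "g xs") auto
  obtain r \<epsilon> where r: "0 \<le> r" and \<epsilon>: "0 < \<epsilon>" and preg: "\<forall>x'\<in>cball xs \<epsilon>. \<forall>x v.
        v \<in> limiting_subdiff g x \<and> norm (x - xs) < \<epsilon> \<and> norm (v - (- f' xs)) < \<epsilon> \<and> g x \<le> g xs + ereal \<epsilon>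
        \<longrightarrow> g x + ereal (v \<bullet> (x' - x) - r / 2 * (norm (x' - x))^2) \<le> g x'"
    using g_preg unfolding prox_regular_at_def by blast
  obtain \<epsilon>H A where \<epsilon>H: "0 < \<epsilon>H" and hd: "\<forall>x\<in>ball xs \<epsilon>H. (f' has_derivative blinfun_apply (A x)) (at x)"
    and hc: "continuous_on (ball xs \<epsilon>H) A"
    using hess_f by blast
  obtain S M where S: "subspace S" and M: "linear M"
    and gq: "\<forall>s. second_subderiv g xs (- f' xs) s = (if s \<in> S then ereal (s \<bullet> M s) else \<infinity>)"
    using g_gq unfolding generalized_quadratic_def by blast
  have L0: "0 \<le> Lf" using lip unfolding lipschitz_on_def by blast
  have glb: "ereal (g0 + (- f' xs) \<bullet> (z - xs) - (norm (z - xs))^2 / (2*\<gamma>1)) \<le> g z" for z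
  proof -
    have p: "xs \<in> prox \<gamma>1 g (xs + \<gamma>1 *\<^sub>R (- f' xs))" using \<gamma>1(2) by simp
    show ?thesis by (rule glb_from_prox[OF p g0 \<gamma>1(1) nm])
  qed
  define \<gamma>0 where "\<gamma>0 = min \<gamma>1 (min (1 / (r + 1)) (1 / (2 * Lf + 1)))"
  have \<gamma>0: "0 < \<gamma>0" unfolding \<gamma>0_def using \<gamma>1 r L0 by (simp add: add_pos_nonneg)
  show ?thesis
  proof (intro exI[of _ \<gamma>0] conjI \<gamma>0 allI impI)
    fix \<gamma> :: real assume \<gamma>: "0 < \<gamma> \<and> \<gamma> < \<gamma>0"
    have g1: "\<gamma> < \<gamma>1" using \<gamma> unfolding \<gamma>0_def by simp
    have "\<gamma> * (r + 1) < 1"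
    proof -
      have "\<gamma> < 1 / (r + 1)" using \<gamma> unfolding \<gamma>0_def by simp
      then show ?thesis using r by (simp add: field_simps add_pos_nonneg)
    qed
    then have rg: "r * \<gamma> < 1" using \<gamma> by (simp add: algebra_simps)
    have "\<gamma> * (2 * Lf + 1) < 1"
    proof -
      have "\<gamma> < 1 / (2 * Lf + 1)" using \<gamma> unfolding \<gamma>0_def by simp
      moreover have "0 < 2 * Lf + 1" using L0 by simp
      ultimately show ?thesis by (simp add: field_simps)
    qed
    then have Lg: "2 * Lf * \<gamma> < 1" using \<gamma> by (simp add: algebra_simps)
    interpret G: gamh f f' Lf g xs "- f' xs" g0 \<gamma>1 \<gamma> S M r \<epsilon> \<epsilon>H A
    proof unfold_locales
      show "\<And>x. GDERIV f x :> f' x" by (rule grad)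
      show "Lf-lipschitz_on UNIV f'" by (rule lip)
      show "\<And>x. g x \<noteq> -\<infinity>" by (rule nm)
      show "lsc_fun g" by (rule g_lsc)
      show "g xs = ereal g0" by (rule g0)
      show "- f' xs = - f' xs" ..
      show "0 < \<gamma>1" by (rule \<gamma>1(1))
      show "\<And>z. ereal (g0 + (- f' xs) \<bullet> (z - xs) - (norm (z - xs))^2 / (2*\<gamma>1)) \<le> g z" by (rule glb)
      show "0 < \<gamma>" using \<gamma> by simp
      show "\<gamma> < \<gamma>1" by (rule g1)
      show "2 * Lf * \<gamma> < 1" by (rule Lg)
      show "twice_epi_differentiable g xs (- f' xs)" by (rule g_epi)
      show "subspace S" by (rule S)
      show "\<And>s. second_subderiv g xs (- f' xs) s = (if s \<in> S then ereal (s \<bullet> M s) else \<infinity>)" using gq by blast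
      show "0 \<le> r" by (rule r)
      show "0 < \<epsilon>" by (rule \<epsilon>)
      show "r * \<gamma> < 1" by (rule rg)
      show "\<And>x' x v. x' \<in> cball xs \<epsilon> \<Longrightarrow> v \<in> limiting_subdiff g x \<Longrightarrow> norm (x - xs) < \<epsilon> \<Longrightarrow>
         norm (v - - f' xs) < \<epsilon> \<Longrightarrow> g x \<le> g xs + ereal \<epsilon> \<Longrightarrow>
         g x + ereal (v \<bullet> (x' - x) - r / 2 * (norm (x' - x))^2) \<le> g x'"
        using preg by blast
      show "0 < \<epsilon>H" by (rule \<epsilon>H)
      show "\<And>x. x \<in> ball xs \<epsilon>H \<Longrightarrow> (f' has_derivative blinfun_apply (A x)) (at x)" using hd by blast
      show "continuous_on (ball xs \<epsilon>H) A" by (rule hc)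
    qed (use M in \<open>auto simp: linear_add linear_scale\<close>)
    show "\<exists>H. twice_diff_at (fbe f f' g \<gamma>) xs H \<and>
              ((\<forall>s. second_subderiv (\<lambda>x. ereal (f x) + g x) xs 0 s \<ge> 0)
                 \<longleftrightarrow> (\<forall>s. H s \<bullet> s \<ge> 0))"
      using G.main_gam by blast
    show "second_order_stationary (\<lambda>x. ereal (f x) + g x) xs
              \<longleftrightarrow> second_order_stationary (fbe f f' g \<gamma>) xs"
      using G.main_gam by blast
  qed
qed


end
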